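(* For every normed plane $(V,\|\cdot\|)$, $$0\le c_S(\|\cdot\|)\le\frac83.$$ Moreover, $c_S(\|\cdot\|)=0$ if and only if the norm is derived from an inner product, and $c_S(\|\cdot\|)=\frac83$ if and only if the plane is rectilinear.
   Context: A normed (Minkowski) plane $(V,\|\cdot\|)$ is a two-dimensional real vector space with a norm; $S=\{v:\|v\|=1\}$ is its unit circle. For nonzero $x,y$, $x$ is Birkhoff orthogonal to $y$, written $x\dashv_B y$, if $\|x+ty\|\ge\|x\|$ for all $t\in\mathbb{R}$ (this forces $x,y$ to be linearly independent). For linearly independent $x,y\in V$, $T_{xy}:V\to V$ is the linear map with $T_{xy}(x)=x$ and $T_{xy}(y)=-y$. The constant $c_S$ is $$c_S(\|\cdot\|)=\sup_{x\dashv_B y}\Big(\sup_{z\in T_{xy}(S)}\|z\|-\inf_{w\in T_{xy}(S)}\|w\|\Big),$$ the outer supremum over all nonzero $x,y\in V$ with $x\dashv_B y$. A normed plane is rectilinear if its unit circle is a parallelogram. *)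

theory Defs
  imports "HOL-Analysis.Analysis"
begin

text \<open>A norm on a real vector space, given as a function (the plane carries its own
norm N, independent of the Euclidean norm of the ambient type).\<close>
definition is_norm :: "('a::real_vector \<Rightarrow> real) \<Rightarrow> bool" where
  "is_norm N \<longleftrightarrow>
     (\<forall>x. 0 \<le> N x) \<and> (\<forall>x. N x = 0 \<longleftrightarrow> x = 0) \<and>
     (\<forall>c x. N (c *\<^sub>R x) = \<bar>c\<bar> * N x) \<and>
     (\<forall>x y. N (x + y) \<le> N x + N y)"

definition unit_circle :: "('a::real_vector \<Rightarrow> real) \<Rightarrow> 'a set" where
  "unit_circle N = {v. N v = 1}"

definition birkhoff_orth :: "('a::real_vector \<Rightarrow> real) \<Rightarrow> 'a \<Rightarrow> 'a \<Rightarrow> bool" where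
  "birkhoff_orth N x y \<longleftrightarrow> x \<noteq> 0 \<and> y \<noteq> 0 \<and> (\<forall>t::real. N (x + t *\<^sub>R y) \<ge> N x)"

definition Txy :: "'a::real_vector \<Rightarrow> 'a \<Rightarrow> 'a \<Rightarrow> 'a" where
  "Txy x y = (THE f. linear f \<and> f x = x \<and> f y = - y)"

definition cS :: "('a::real_vector \<Rightarrow> real) \<Rightarrow> real" where
  "cS N = (SUP p \<in> {(x, y). birkhoff_orth N x y}.
             (SUP z \<in> Txy (fst p) (snd p) ` unit_circle N. N z)
           - (INF w \<in> Txy (fst p) (snd p) ` unit_circle N. N w))"

definition inner_product_norm :: "('a::real_vector \<Rightarrow> real) \<Rightarrow> bool" where
  "inner_product_norm N \<longleftrightarrow>
     (\<exists>B :: 'a \<Rightarrow> 'a \<Rightarrow> real.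
        (\<forall>x y z. B (x + y) z = B x z + B y z) \<and>
        (\<forall>c x y. B (c *\<^sub>R x) y = c * B x y) \<and>
        (\<forall>x y. B x y = B y x) \<and>
        (\<forall>x. x \<noteq> 0 \<longrightarrow> B x x > 0) \<and>
        (\<forall>x. N x = sqrt (B x x)))"

definition rectilinear :: "('a::euclidean_space \<Rightarrow> real) \<Rightarrow> bool" where
  "rectilinear N \<longleftrightarrow>
     (\<exists>c u v. u \<noteq> v \<and> independent {u, v} \<and>
        unit_circle N = frontier (convex hull {c, c + u, c + u + v, c + v}))"

end

theory Submission
  imports Defs
begin

locale plane =
  fixes N :: "'a::euclidean_space \<Rightarrow> real" and e1 e2 :: 'a
  assumes basis: "Basis = {e1, e2}" and e12: "e1 \<noteq> e2" and isn: "is_norm N"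
begin

lemma N_nonneg: "0 \<le> N x" using isn unfolding is_norm_def by auto
lemma N_zero_iff: "N x = 0 \<longleftrightarrow> x = 0" using isn unfolding is_norm_def by auto
lemma N_scale: "N (c *\<^sub>R x) = \<bar>c\<bar> * N x" using isn unfolding is_norm_def by auto
lemma N_tri: "N (x + y) \<le> N x + N y" using isn unfolding is_norm_def by auto
lemma N_0[simp]: "N 0 = 0" using N_zero_iff by simp
lemma N_pos: "x \<noteq> 0 \<Longrightarrow> 0 < N x" using N_nonneg N_zero_iff by (metis less_eq_real_def)
lemma N_minus[simp]: "N (- x) = N x" using N_scale[of "-1" x] by simp
lemma N_diff_comm: "N (x - y) = N (y - x)" by (metis N_minus minus_diff_eq)
lemma N_tri_diff: "N (x - y) \<le> N x + N y"
  using N_tri[of x "-y"] by simp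
lemma N_rev_tri: "\<bar>N x - N y\<bar> \<le> N (x - y)"
proof -
  have "N x \<le> N (x - y) + N y" using N_tri[of "x-y" y] by simp
  moreover have "N y \<le> N (x - y) + N x" using N_tri[of "y-x" x] N_diff_comm[of x y] by simp
  ultimately show ?thesis by linarith
qed
lemma N_convex: "0 \<le> t \<Longrightarrow> t \<le> 1 \<Longrightarrow> N ((1 - t) *\<^sub>R a + t *\<^sub>R b) \<le> (1 - t) * N a + t * N b"
  using N_tri[of "(1 - t) *\<^sub>R a" "t *\<^sub>R b"] N_scale by simp

lemma e1B: "e1 \<in> Basis" and e2B: "e2 \<in> Basis" using basis by auto
lemma inner_e[simp]: "e1 \<bullet> e1 = 1" "e2 \<bullet> e2 = 1" "e1 \<bullet> e2 = 0" "e2 \<bullet> e1 = 0"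
  using e1B e2B e12 by (auto simp: inner_Basis)
lemma e1_ne0[simp]: "e1 \<noteq> 0" and e2_ne0[simp]: "e2 \<noteq> 0" using e1B e2B nonzero_Basis by auto

lemma repr: "x = (x \<bullet> e1) *\<^sub>R e1 + (x \<bullet> e2) *\<^sub>R e2"
proof -
  have "(\<Sum>b\<in>{e1,e2}. (x \<bullet> b) *\<^sub>R b) = x" using euclidean_representation[of x] by (simp only: basis)
  then show ?thesis using e12 by simp
qed

lemma vec_eqI: "x \<bullet> e1 = y \<bullet> e1 \<Longrightarrow> x \<bullet> e2 = y \<bullet> e2 \<Longrightarrow> x = y"
  by (rule euclidean_eqI) (auto simp: basis)

definition det :: "'a \<Rightarrow> 'a \<Rightarrow> real" where
  "det p q = (p \<bullet> e1) * (q \<bullet> e2) - (p \<bullet> e2) * (q \<bullet> e1)"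

lemma det_simps[simp]:
  "det p p = 0"
  "det (p + q) r = det p r + det q r" "det r (p + q) = det r p + det r q"
  "det (p - q) r = det p r - det q r" "det r (p - q) = det r p - det r q"
  "det (c *\<^sub>R p) q = c * det p q" "det p (c *\<^sub>R q) = c * det p q"
  "det (- p) q = - det p q" "det p (- q) = - det p q"
  "det 0 q = 0" "det q 0 = 0"
  by (auto simp: det_def algebra_simps inner_add_left inner_diff_left)

lemma det_swap: "det q p = - det p q" by (simp add: det_def)

lemma cramer: "det x y *\<^sub>R z = det z y *\<^sub>R x + det x z *\<^sub>R y"
  by (rule vec_eqI) (auto simp: det_def inner_add_left algebra_simps)

lemma det_zero_par: assumes "det p q = 0" "q \<noteq> 0" shows "\<exists>c. p = c *\<^sub>R q"
proof (cases "q \<bullet> e1 = 0")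
  case True
  then have h: "q \<bullet> e2 \<noteq> 0" using assms(2) repr[of q] by auto
  show ?thesis
    apply (rule exI[of _ "(p \<bullet> e2) / (q \<bullet> e2)"])
    apply (rule vec_eqI) using assms(1) True h by (auto simp: det_def field_simps)
next
  case False
  show ?thesis
    apply (rule exI[of _ "(p \<bullet> e1) / (q \<bullet> e1)"])
    apply (rule vec_eqI) using assms(1) False by (auto simp: det_def field_simps)
qed

lemma coords: assumes "det x y \<noteq> 0"
  shows "z = (det z y / det x y) *\<^sub>R x + (det x z / det x y) *\<^sub>R y"
proof -
  have "det x y *\<^sub>R z = det z y *\<^sub>R x + det x z *\<^sub>R y" by (rule cramer)
  then have "z = (1 / det x y) *\<^sub>R (det z y *\<^sub>R x + det x z *\<^sub>R y)"
    using assms by (metis divide_self_if scaleR_one scaleR_scaleR times_divide_eq_left mult.commute)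
  then show ?thesis using assms by (simp add: scaleR_add_right)
qed

lemma coords_unique: assumes "det x y \<noteq> 0" "a *\<^sub>R x + b *\<^sub>R y = c *\<^sub>R x + d *\<^sub>R y"
  shows "a = c \<and> b = d"
proof -
  have "det (a *\<^sub>R x + b *\<^sub>R y) y = det (c *\<^sub>R x + d *\<^sub>R y) y"
       "det x (a *\<^sub>R x + b *\<^sub>R y) = det x (c *\<^sub>R x + d *\<^sub>R y)" using assms(2) by auto
  then show ?thesis using assms(1) by simp
qed

definition C0 :: real where "C0 = N e1 + N e2"

lemma N_le_norm: "N p \<le> C0 * norm p"
proof -
  have "N p = N ((p \<bullet> e1) *\<^sub>R e1 + (p \<bullet> e2) *\<^sub>R e2)" using repr[of p] by simp
  also have "\<dots> \<le> \<bar>p \<bullet> e1\<bar> * N e1 + \<bar>p \<bullet> e2\<bar> * N e2" using N_tri N_scale by (metis)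
  also have "\<dots> \<le> norm p * N e1 + norm p * N e2"
    by (intro add_mono mult_right_mono Basis_le_norm e1B e2B N_nonneg)
  finally show ?thesis by (simp add: C0_def algebra_simps)
qed

lemma C0_nonneg: "0 \<le> C0" by (simp add: C0_def N_nonneg add_nonneg_nonneg)

lemma N_lipschitz: "C0-lipschitz_on UNIV N"
proof (rule lipschitz_onI)
  fix x y :: 'a
  have "dist (N x) (N y) = \<bar>N x - N y\<bar>" by (simp add: dist_real_def)
  also have "\<dots> \<le> N (x - y)" by (rule N_rev_tri)
  also have "\<dots> \<le> C0 * dist x y" using N_le_norm by (simp add: dist_norm)
  finally show "dist (N x) (N y) \<le> C0 * dist x y" .
qed (rule C0_nonneg)

lemma N_cont_on: "continuous_on S N"
  using lipschitz_on_continuous_on[OF N_lipschitz] continuous_on_subset by blast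

lemma N_isCont: "isCont N x"
  using N_cont_on[of UNIV] continuous_on_eq_continuous_at by blast

lemma N_tendsto: "(f \<longlongrightarrow> l) F \<Longrightarrow> ((\<lambda>n. N (f n)) \<longlongrightarrow> N l) F"
  using N_isCont isCont_tendsto_compose by blast

lemma N_lower: "\<exists>m>0. \<forall>p. m * norm p \<le> N p"
proof -
  have "compact (sphere (0::'a) 1)" by simp
  moreover have "sphere (0::'a) 1 \<noteq> {}" using e1B by (auto simp: sphere_def intro!: exI[of _ e1])
  ultimately obtain p0 where p0: "p0 \<in> sphere 0 1" "\<forall>q\<in>sphere 0 1. N p0 \<le> N q"
    using continuous_attains_inf[of "sphere 0 1" N] N_cont_on by blast
  have "p0 \<noteq> 0" using p0 by auto
  then have pos: "N p0 > 0" by (rule N_pos)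
  show ?thesis
  proof (intro exI[of _ "N p0"] conjI allI pos)
    fix p :: 'a
    show "N p0 * norm p \<le> N p"
    proof (cases "p = 0")
      case False
      then have "(1/norm p) *\<^sub>R p \<in> sphere 0 1" by simp
      then have "N p0 \<le> N ((1/norm p) *\<^sub>R p)" using p0 by blast
      also have "\<dots> = N p / norm p" using N_scale by simp
      finally show ?thesis using False by (simp add: field_simps)
    qed simp
  qed
qed

definition Snorm :: "'a set" where "Snorm = unit_circle N"
lemma in_S: "z \<in> unit_circle N \<longleftrightarrow> N z = 1" by (simp add: unit_circle_def)

lemma S_bounded: "bounded (unit_circle N)"
proof -
  obtain m where m: "m > 0" "\<forall>p. m * norm p \<le> N p" using N_lower by blast
  show ?thesis unfolding bounded_iff
  proof (intro exI ballI)
    fix z assume "z \<in> unit_circle N"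
    then have "m * norm z \<le> 1" using m(2)[rule_format, of z] in_S by auto
    then show "norm z \<le> 1/m" using m by (simp add: field_simps)
  qed
qed

lemma S_closed: "closed (unit_circle N)"
proof -
  have "unit_circle N = N -` {1}" by (auto simp: unit_circle_def)
  then show ?thesis using continuous_closed_vimage[of "{1}" N] N_isCont by auto
qed

lemma S_compact: "compact (unit_circle N)" using S_bounded S_closed compact_eq_bounded_closed by blast

lemma normalize_S: "z \<noteq> 0 \<Longrightarrow> N ((1 / N z) *\<^sub>R z) = 1"
  using N_scale[of "1 / N z" z] N_pos[of z] by simp

lemma e1n_S: "(1 / N e1) *\<^sub>R e1 \<in> unit_circle N" using normalize_S[of e1] in_S by simp

lemma birk_ne: "birkhoff_orth N x y \<Longrightarrow> x \<noteq> 0 \<and> y \<noteq> 0" by (simp add: birkhoff_orth_def)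
lemma birk_le: "birkhoff_orth N x y \<Longrightarrow> N x \<le> N (x + t *\<^sub>R y)" by (simp add: birkhoff_orth_def)

lemma birk_det: assumes "birkhoff_orth N x y" shows "det x y \<noteq> 0"
proof
  assume d: "det x y = 0"
  have ne: "x \<noteq> 0" "y \<noteq> 0" using birk_ne[OF assms] by auto
  obtain c where c: "x = c *\<^sub>R y" using det_zero_par[OF d ne(2)] by blast
  have "N x \<le> N (x + (- c) *\<^sub>R y)" by (rule birk_le[OF assms])
  also have "x + (- c) *\<^sub>R y = 0" using c by simp
  finally show False using N_pos[OF ne(1)] by simp
qed

lemma birk_scale: assumes "birkhoff_orth N x y" "a \<noteq> 0" "b \<noteq> 0"
  shows "birkhoff_orth N (a *\<^sub>R x) (b *\<^sub>R y)"
  unfolding birkhoff_orth_def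
proof (intro conjI allI)
  show "a *\<^sub>R x \<noteq> 0" "b *\<^sub>R y \<noteq> 0" using assms birk_ne by auto
  fix t :: real
  have "a *\<^sub>R x + t *\<^sub>R b *\<^sub>R y = a *\<^sub>R (x + (t * b / a) *\<^sub>R y)"
    using assms(2) by (simp add: scaleR_add_right)
  then have "N (a *\<^sub>R x + t *\<^sub>R b *\<^sub>R y) = \<bar>a\<bar> * N (x + (t * b / a) *\<^sub>R y)" using N_scale by simp
  moreover have "N x \<le> N (x + (t * b / a) *\<^sub>R y)" by (rule birk_le[OF assms(1)])
  ultimately show "N (a *\<^sub>R x) \<le> N (a *\<^sub>R x + t *\<^sub>R b *\<^sub>R y)"
    using N_scale[of a x] by (simp add: mult_left_mono)
qed

lemma birk_bound: assumes "birkhoff_orth N x y" shows "\<bar>a\<bar> * N x \<le> N (a *\<^sub>R x + b *\<^sub>R y)"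
proof (cases "a = 0")
  case False
  have "a *\<^sub>R x + b *\<^sub>R y = a *\<^sub>R (x + (b / a) *\<^sub>R y)" using False by (simp add: scaleR_add_right)
  then have "N (a *\<^sub>R x + b *\<^sub>R y) = \<bar>a\<bar> * N (x + (b / a) *\<^sub>R y)" using N_scale by simp
  moreover have "N x \<le> N (x + (b / a) *\<^sub>R y)" by (rule birk_le[OF assms])
  ultimately show ?thesis by (simp add: mult_left_mono)
qed (simp add: N_nonneg)

definition Tf :: "'a \<Rightarrow> 'a \<Rightarrow> 'a \<Rightarrow> 'a" where
  "Tf x y z = z - (2 * det x z / det x y) *\<^sub>R y"

lemma Tf_linear: "linear (Tf x y)"
  by (rule linearI) (auto simp: Tf_def algebra_simps scaleR_add_left add_divide_distrib
        diff_divide_distrib)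

lemma Tf_x: "det x y \<noteq> 0 \<Longrightarrow> Tf x y x = x" by (simp add: Tf_def)
lemma Tf_y: "det x y \<noteq> 0 \<Longrightarrow> Tf x y y = - y" by (simp add: Tf_def scaleR_2)

lemma two_scale: fixes v :: "'a" shows "(2 * b) *\<^sub>R v = b *\<^sub>R v + b *\<^sub>R v"
  by (subst mult_2) (rule scaleR_left_distrib)

lemma Tf_comb: assumes "det x y \<noteq> 0" shows "Tf x y (a *\<^sub>R x + b *\<^sub>R y) = a *\<^sub>R x - b *\<^sub>R y"
proof -
  have "det x (a *\<^sub>R x + b *\<^sub>R y) = b * det x y" by simp
  then have "2 * det x (a *\<^sub>R x + b *\<^sub>R y) / det x y = 2 * b" using assms by simp
  then have "Tf x y (a *\<^sub>R x + b *\<^sub>R y) = a *\<^sub>R x + b *\<^sub>R y - (2 * b) *\<^sub>R y"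
    by (simp only: Tf_def)
  also have "\<dots> = a *\<^sub>R x - b *\<^sub>R y" by (simp only: two_scale) simp
  finally show ?thesis .
qed

lemma linear_eq_on_basis: assumes "det x y \<noteq> 0" "linear f" "linear g" "f x = g x" "f y = g y"
  shows "f = g"
proof
  fix z
  define a b where "a = det z y / det x y" and "b = det x z / det x y"
  have z: "z = a *\<^sub>R x + b *\<^sub>R y" unfolding a_def b_def by (rule coords[OF assms(1)])
  have "f z = a *\<^sub>R f x + b *\<^sub>R f y"
    by (subst z) (simp add: linear_add[OF assms(2)] linear_scale[OF assms(2)])
  moreover have "g z = a *\<^sub>R g x + b *\<^sub>R g y"
    by (subst z) (simp add: linear_add[OF assms(3)] linear_scale[OF assms(3)])
  ultimately show "f z = g z" using assms(4,5) by simp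
qed

lemma Txy_char: assumes "det x y \<noteq> 0" "linear f" "f x = x" "f y = - y"
  shows "Txy x y = f"
proof -
  have "(THE f. linear f \<and> f x = x \<and> f y = - y) = f"
  proof (rule the_equality)
    show "linear f \<and> f x = x \<and> f y = - y" using assms by auto
    fix g assume "linear g \<and> g x = x \<and> g y = - y"
    then show "g = f" using linear_eq_on_basis[OF assms(1), of g f] assms by auto
  qed
  then show ?thesis by (simp add: Txy_def)
qed

lemma Txy_Tf: "det x y \<noteq> 0 \<Longrightarrow> Txy x y = Tf x y"
  by (rule Txy_char) (auto simp: Tf_linear Tf_x Tf_y)

lemma Tf_invol: assumes "det x y \<noteq> 0" shows "Tf x y (Tf x y z) = z"
proof -
  have "(\<lambda>z. Tf x y (Tf x y z)) = id"
    apply (rule linear_eq_on_basis[OF assms])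
    using Tf_linear[of x y] by (auto simp: linear_compose[unfolded o_def] Tf_x Tf_y assms linear_id linear_neg)
  then show ?thesis by (metis id_apply)
qed

lemma Tf_bound: assumes "birkhoff_orth N x y" shows "N (Tf x y z) \<le> 3 * N z"
proof -
  have d: "det x y \<noteq> 0" by (rule birk_det[OF assms])
  define a b where "a = det z y / det x y" and "b = det x z / det x y"
  have z: "z = a *\<^sub>R x + b *\<^sub>R y" unfolding a_def b_def by (rule coords[OF d])
  have "Tf x y z = a *\<^sub>R x - b *\<^sub>R y" using Tf_comb[OF d] z by metis
  also have "\<dots> = (2 * a) *\<^sub>R x - z" using z by (simp add: two_scale)
  finally have "N (Tf x y z) \<le> N ((2*a) *\<^sub>R x) + N z" using N_tri_diff by metis
  also have "\<dots> = 2 * (\<bar>a\<bar> * N x) + N z" using N_scale[of "2*a" x] by (simp add: abs_mult)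
  also have "\<bar>a\<bar> * N x \<le> N z" using birk_bound[OF assms, of a b] z by simp
  finally show ?thesis by simp
qed

lemma Tf_lower: assumes "birkhoff_orth N x y" shows "N z \<le> 3 * N (Tf x y z)"
  using Tf_bound[OF assms, of "Tf x y z"] Tf_invol[OF birk_det[OF assms]] by simp

definition U :: "'a set" where "U = {z. N z < 1}"

lemma U_open: "open U"
  unfolding U_def using open_Collect_less[of N "\<lambda>_. 1"] N_cont_on by auto

lemma U_convex: "convex U"
proof (rule convexI)
  fix x y :: 'a and u v :: real
  assume xy: "x \<in> U" "y \<in> U" and uv: "0 \<le> u" "0 \<le> v" "u + v = 1"
  have nx: "N x < 1" and ny: "N y < 1" using xy by (auto simp: U_def)
  have "N (u *\<^sub>R x + v *\<^sub>R y) \<le> N (u *\<^sub>R x) + N (v *\<^sub>R y)" by (rule N_tri)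
  also have "\<dots> = u * N x + v * N y" using uv by (simp add: N_scale)
  also have "\<dots> < 1"
  proof (cases "u = 0")
    case True then show ?thesis using uv ny by simp
  next
    case False
    then have "u * N x < u * 1" using uv nx by (intro mult_strict_left_mono) auto
    moreover have "v * N y \<le> v * 1" using uv ny by (intro mult_left_mono) auto
    ultimately show ?thesis using uv by linarith
  qed
  finally show "u *\<^sub>R x + v *\<^sub>R y \<in> U" by (simp add: U_def)
qed

lemma unit_in_closure_U: assumes "N m = 1" shows "m \<in> closure U"
  unfolding closure_approachable
proof (intro allI impI)
  fix e :: real assume e: "e > 0"
  have m0: "m \<noteq> 0" using assms by auto
  define d where "d = min (1/2) (e / (2 * norm m))"
  have d: "0 < d" "d < 1" "d * norm m < e" using e m0 by (auto simp: d_def min_def field_simps)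
  have "(1 - d) *\<^sub>R m \<in> U" using d assms N_scale[of "1-d" m] by (simp add: U_def)
  moreover have "dist ((1 - d) *\<^sub>R m) m = d * norm m"
    using d by (simp add: dist_norm algebra_simps)
  ultimately show "\<exists>y\<in>U. dist y m < e" using d(3) by (intro bexI[of _ "(1 - d) *\<^sub>R m"]) auto
qed

definition perp :: "'a \<Rightarrow> 'a" where "perp a = (a \<bullet> e2) *\<^sub>R e1 - (a \<bullet> e1) *\<^sub>R e2"

lemma perp_inner: "a \<bullet> perp a = 0" by (simp add: perp_def inner_diff_right)
lemma perp_e: "perp a \<bullet> e1 = a \<bullet> e2" "perp a \<bullet> e2 = - (a \<bullet> e1)"
  by (simp_all add: perp_def inner_diff_left)

lemma perp_ne: assumes "a \<noteq> 0" shows "perp a \<noteq> 0"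
proof
  assume "perp a = 0"
  then have "a \<bullet> e2 = 0" "a \<bullet> e1 = 0" using perp_e[of a] by auto
  then show False using assms repr[of a] by simp
qed

lemma birk_exists_unit: assumes "N m = 1" shows "\<exists>y. birkhoff_orth N m y"
proof -
  have nri: "m \<notin> rel_interior U" using rel_interior_subset[of U] assms by (auto simp: U_def)
  obtain a where a0: "a \<noteq> 0" and "\<And>w. w \<in> closure U \<Longrightarrow> a \<bullet> m \<le> a \<bullet> w"
    and a2: "\<And>w. w \<in> rel_interior U \<Longrightarrow> a \<bullet> m < a \<bullet> w"
    by (rule supporting_hyperplane_relative_frontier[OF U_convex unit_in_closure_U[OF assms] nri]) blast
  have ri: "rel_interior U = U" using rel_interior_open[OF U_open] .
  show ?thesis
  proof (intro exI[of _ "perp a"])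
    show "birkhoff_orth N m (perp a)" unfolding birkhoff_orth_def
    proof (intro conjI allI)
      show "m \<noteq> 0" using assms by auto
      show "perp a \<noteq> 0" using perp_ne[OF a0] .
      fix t :: real
      have "a \<bullet> (m + t *\<^sub>R perp a) = a \<bullet> m" by (simp add: inner_add_right perp_inner)
      then have "m + t *\<^sub>R perp a \<notin> U" using a2 ri by fastforce
      then show "N m \<le> N (m + t *\<^sub>R perp a)" using assms by (simp add: U_def)
    qed
  qed
qed

lemma birk_exists: assumes "m \<noteq> 0" shows "\<exists>y. birkhoff_orth N m y"
proof -
  obtain y where y: "birkhoff_orth N ((1 / N m) *\<^sub>R m) y" using birk_exists_unit normalize_S[OF assms] by blast
  have "birkhoff_orth N (N m *\<^sub>R ((1 / N m) *\<^sub>R m)) (1 *\<^sub>R y)"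
    by (rule birk_scale[OF y]) (use N_pos[OF assms] in auto)
  then show ?thesis using N_pos[OF assms] by auto
qed

definition trm :: "'a \<Rightarrow> 'a \<Rightarrow> real" where
  "trm x y = (SUP z \<in> Txy x y ` unit_circle N. N z) - (INF w \<in> Txy x y ` unit_circle N. N w)"

lemma cS_eq: "cS N = (SUP p \<in> {(x, y). birkhoff_orth N x y}. trm (fst p) (snd p))"
  unfolding cS_def trm_def by simp

lemma S_ne: "unit_circle N \<noteq> {}" using e1n_S by blast

lemma T_vals: assumes "birkhoff_orth N x y" "w \<in> Txy x y ` unit_circle N"
  shows "1/3 \<le> N w \<and> N w \<le> 3"
proof -
  obtain z where z: "N z = 1" "w = Tf x y z"
    using assms(2) Txy_Tf[OF birk_det[OF assms(1)]] in_S by auto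
  show ?thesis using Tf_bound[OF assms(1), of z] Tf_lower[OF assms(1), of z] z by auto
qed

lemma T_bdd: assumes "birkhoff_orth N x y"
  shows "bdd_above (N ` Txy x y ` unit_circle N)" "bdd_below (N ` Txy x y ` unit_circle N)"
  using T_vals[OF assms] by (auto intro!: bdd_aboveI[of _ 3] bdd_belowI[of _ "1/3"])

lemma T_ne: "Txy x y ` unit_circle N \<noteq> {}" using S_ne by blast

lemma trm_bounds: assumes "birkhoff_orth N x y" shows "0 \<le> trm x y" "trm x y \<le> 8/3"
proof -
  let ?A = "Txy x y ` unit_circle N"
  have sup3: "(SUP z\<in>?A. N z) \<le> 3" by (rule cSUP_least[OF T_ne]) (use T_vals[OF assms] in auto)
  have inf3: "1/3 \<le> (INF z\<in>?A. N z)" by (rule cINF_greatest[OF T_ne]) (use T_vals[OF assms] in auto)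
  obtain w where w: "w \<in> ?A" using T_ne by blast
  have "(INF z\<in>?A. N z) \<le> N w" by (rule cINF_lower[OF T_bdd(2)[OF assms] w])
  also have "N w \<le> (SUP z\<in>?A. N z)" by (rule cSUP_upper[OF w T_bdd(1)[OF assms]])
  finally show "0 \<le> trm x y" unfolding trm_def by simp
  show "trm x y \<le> 8/3" unfolding trm_def using sup3 inf3 by simp
qed

lemma P_ne: "{(x, y). birkhoff_orth N x y} \<noteq> {}"
  using birk_exists[of e1] by auto

lemma trm_bdd: "bdd_above ((\<lambda>p. trm (fst p) (snd p)) ` {(x, y). birkhoff_orth N x y})"
  by (rule bdd_aboveI[of _ "8/3"]) (auto dest: trm_bounds(2))

lemma cS_nonneg: "0 \<le> cS N"
proof -
  obtain y where y: "birkhoff_orth N e1 y" using birk_exists[of e1] by auto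
  have "trm e1 y \<le> cS N" unfolding cS_eq
    using cSUP_upper[OF _ trm_bdd, of "(e1, y)"] y by auto
  then show ?thesis using trm_bounds(1)[OF y] by linarith
qed

lemma cS_le: "cS N \<le> 8/3"
  unfolding cS_eq by (rule cSUP_least[OF P_ne]) (auto dest: trm_bounds(2))

end

lemma comb: fixes a b :: "'a::real_vector"
  shows "l *\<^sub>R (s1 *\<^sub>R a + b) + (1 - l) *\<^sub>R (s3 *\<^sub>R a + b) = (l * s1 + (1 - l) * s3) *\<^sub>R a + b"
proof -
  have "l *\<^sub>R (s1 *\<^sub>R a + b) + (1 - l) *\<^sub>R (s3 *\<^sub>R a + b) = (l * s1) *\<^sub>R a + ((1 - l) * s3) *\<^sub>R a + (l *\<^sub>R b + (1 - l) *\<^sub>R b)"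
    by (simp add: scaleR_add_right)
  also have "l *\<^sub>R b + (1 - l) *\<^sub>R b = b" by (simp add: scaleR_add_left[symmetric])
  finally show ?thesis by (simp add: scaleR_add_left)
qed
lemma comb2: fixes a b :: "'a::real_vector"
  shows "l *\<^sub>R ((1/r) *\<^sub>R (s1 *\<^sub>R a + b)) + (1 - l) *\<^sub>R ((1/r) *\<^sub>R (s3 *\<^sub>R a + b)) = (1/r) *\<^sub>R ((l * s1 + (1 - l) * s3) *\<^sub>R a + b)"
  by (simp add: comb[symmetric] scaleR_add_right del: scaleR_scaleR) (simp add: scaleR_scaleR mult.commute)

context plane
begin

definition isoR :: bool where
  "isoR \<longleftrightarrow> (\<forall>x y. birkhoff_orth N x y \<longrightarrow> (\<forall>z. N (Tf x y z) = N z))"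

lemma isoR_D: "isoR \<Longrightarrow> birkhoff_orth N x y \<Longrightarrow> N (Tf x y z) = N z"
  by (simp add: isoR_def)

lemma det_ne0: "det p q \<noteq> 0 \<Longrightarrow> p \<noteq> 0 \<and> q \<noteq> 0" by auto

lemma iso_birk: assumes d: "det p q \<noteq> 0" and iso: "\<And>z. N (Tf p q z) = N z"
  shows "birkhoff_orth N p q"
  unfolding birkhoff_orth_def
proof (intro conjI allI)
  show "p \<noteq> 0" "q \<noteq> 0" using det_ne0[OF d] by auto
  fix t :: real
  have "Tf p q (1 *\<^sub>R p + t *\<^sub>R q) = 1 *\<^sub>R p - t *\<^sub>R q" by (rule Tf_comb[OF d])
  then have e: "N (p - t *\<^sub>R q) = N (p + t *\<^sub>R q)" using iso[of "p + t *\<^sub>R q"] by simp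
  have "N (2 *\<^sub>R p) = N ((p + t *\<^sub>R q) + (p - t *\<^sub>R q))" by (simp add: scaleR_2)
  also have "\<dots> \<le> N (p + t *\<^sub>R q) + N (p - t *\<^sub>R q)" by (rule N_tri)
  finally have "2 * N p \<le> 2 * N (p + t *\<^sub>R q)" using e N_scale[of 2 p] by simp
  then show "N p \<le> N (p + t *\<^sub>R q)" by simp
qed

lemma Tf_swap: assumes d: "det p q \<noteq> 0" shows "Tf q p z = - Tf p q z"
proof -
  have d': "det q p \<noteq> 0" using d det_swap[of q p] by simp
  have lin: "linear (\<lambda>z. - Tf p q z)" using Tf_linear[of p q] by (rule linear_compose_neg)
  have "Txy q p = (\<lambda>z. - Tf p q z)"
    by (rule Txy_char[OF d' lin]) (simp_all add: Tf_x[OF d] Tf_y[OF d])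
  then show ?thesis using Txy_Tf[OF d'] by metis
qed

lemma birk_sym: assumes H: isoR and b: "birkhoff_orth N p q" shows "birkhoff_orth N q p"
proof -
  have d: "det p q \<noteq> 0" by (rule birk_det[OF b])
  have d': "det q p \<noteq> 0" using d det_swap[of q p] by simp
  show ?thesis
    by (rule iso_birk[OF d']) (simp add: Tf_swap[OF d] isoR_D[OF H b])
qed

lemma birk_unique: assumes H: isoR and b1: "birkhoff_orth N p q1" and b2: "birkhoff_orth N p q2"
  shows "det q1 q2 = 0"
proof -
  have d1: "det p q1 \<noteq> 0" by (rule birk_det[OF b1])
  have d2: "det p q2 \<noteq> 0" by (rule birk_det[OF b2])
  define c e where "c = det q2 q1 / det p q1" and "e = det p q2 / det p q1"
  have q2: "q2 = c *\<^sub>R p + e *\<^sub>R q1" unfolding c_def e_def by (rule coords[OF d1])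
  have e0: "e \<noteq> 0" using d1 d2 by (simp add: e_def)
  have dq2: "det p q2 = e * det p q1" using q2 by simp
  define k where "k = 2 * c / e"
  have T2q1: "Tf p q2 q1 = - q1 - k *\<^sub>R p"
  proof -
    have "Tf p q2 q1 = q1 - (2 / e) *\<^sub>R q2" using dq2 d1 e0 by (simp add: Tf_def)
    also have "\<dots> = q1 - (2 / e) *\<^sub>R (c *\<^sub>R p + e *\<^sub>R q1)" using q2 by simp
    also have "\<dots> = - q1 - k *\<^sub>R p" using e0
      by (simp add: k_def scaleR_add_right algebra_simps scaleR_2)
    finally show ?thesis .
  qed
  have step: "Tf p q1 (Tf p q2 (q1 - t *\<^sub>R p)) = q1 - (k + t) *\<^sub>R p" for t
  proof -
    have "Tf p q2 (q1 - t *\<^sub>R p) = Tf p q2 q1 - t *\<^sub>R Tf p q2 p"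
      using Tf_linear[of p q2] by (simp add: linear_diff linear_scale)
    also have "\<dots> = (- (k + t)) *\<^sub>R p + (-1) *\<^sub>R q1" using T2q1 Tf_x[OF d2]
      by (simp add: algebra_simps)
    finally have "Tf p q1 (Tf p q2 (q1 - t *\<^sub>R p)) = Tf p q1 ((- (k + t)) *\<^sub>R p + (-1) *\<^sub>R q1)" by simp
    also have "\<dots> = (- (k + t)) *\<^sub>R p - (-1) *\<^sub>R q1" by (rule Tf_comb[OF d1])
    finally show ?thesis by (simp add: algebra_simps)
  qed
  have iter: "N (q1 - (real n * k) *\<^sub>R p) = N q1" for n
  proof (induction n)
    case 0 then show ?case by simp
  next
    case (Suc n)
    have "N (q1 - (real (Suc n) * k) *\<^sub>R p) = N (q1 - (k + real n * k) *\<^sub>R p)"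
      by (simp add: algebra_simps)
    also have "\<dots> = N (Tf p q1 (Tf p q2 (q1 - (real n * k) *\<^sub>R p)))" using step by simp
    also have "\<dots> = N (q1 - (real n * k) *\<^sub>R p)" using isoR_D[OF H b1] isoR_D[OF H b2] by simp
    finally show ?case using Suc by simp
  qed
  have "c = 0"
  proof (rule ccontr)
    assume "c \<noteq> 0"
    then have k0: "k \<noteq> 0" using e0 by (simp add: k_def)
    have p0: "p \<noteq> 0" using d1 by auto
    have pos: "\<bar>k\<bar> * N p > 0" using k0 N_pos[OF p0] by simp
    obtain n :: nat where n: "real n > 2 * N q1 / (\<bar>k\<bar> * N p)" using reals_Archimedean2 by blast
    then have "real n * (\<bar>k\<bar> * N p) > 2 * N q1" using pos by (simp add: field_simps)
    moreover have "N ((real n * k) *\<^sub>R p) \<le> N q1 + N (q1 - (real n * k) *\<^sub>R p)"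
      using N_tri_diff[of q1 "q1 - (real n * k) *\<^sub>R p"] by (simp add: algebra_simps)
    moreover have "N ((real n * k) *\<^sub>R p) = real n * (\<bar>k\<bar> * N p)" by (simp add: N_scale abs_mult)
    ultimately show False using iter[of n] by linarith
  qed
  then have "q2 = e *\<^sub>R q1" using q2 by simp
  then show ?thesis by simp
qed

lemma N_line_convex: assumes "a < r" "r < b"
  shows "(b - a) * N (p + r *\<^sub>R w) \<le> (b - r) * N (p + a *\<^sub>R w) + (r - a) * N (p + b *\<^sub>R w)"
proof -
  define t where "t = (r - a) / (b - a)"
  have t: "0 \<le> t" "t \<le> 1" using assms by (auto simp: t_def field_simps)
  have tb: "t * (b - a) = r - a" using assms by (simp add: t_def)
  have tb2: "(1 - t) * (b - a) = b - r" using tb by (simp add: algebra_simps)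
  have "(1 - t) * a + t * b = a + t * (b - a)" by (simp add: algebra_simps)
  then have r: "(1 - t) * a + t * b = r" using tb by simp
  have "(1 - t) *\<^sub>R (p + a *\<^sub>R w) + t *\<^sub>R (p + b *\<^sub>R w) = p + ((1 - t) * a + t * b) *\<^sub>R w"
    by (simp add: algebra_simps)
  then have "p + r *\<^sub>R w = (1 - t) *\<^sub>R (p + a *\<^sub>R w) + t *\<^sub>R (p + b *\<^sub>R w)" using r by simp
  then have "N (p + r *\<^sub>R w) \<le> (1 - t) * N (p + a *\<^sub>R w) + t * N (p + b *\<^sub>R w)"
    using N_convex[OF t] by simp
  then have "(b - a) * N (p + r *\<^sub>R w) \<le> (b - a) * ((1 - t) * N (p + a *\<^sub>R w) + t * N (p + b *\<^sub>R w))"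
    using assms by (intro mult_left_mono) auto
  also have "\<dots> = ((1 - t) * (b - a)) * N (p + a *\<^sub>R w) + (t * (b - a)) * N (p + b *\<^sub>R w)"
    by (simp add: algebra_simps)
  also have "\<dots> = (b - r) * N (p + a *\<^sub>R w) + (r - a) * N (p + b *\<^sub>R w)"
    by (simp only: tb tb2)
  finally show ?thesis .
qed

lemma three_ge: assumes s: "0 < s" "s < 1"
  and v: "N p = 1" "N (p + s *\<^sub>R w) = 1" "N (p + w) = 1"
  shows "1 \<le> N (p + t *\<^sub>R w)"
proof -
  let ?f = "\<lambda>t. N (p + t *\<^sub>R w)"
  have f0: "?f 0 = 1" "?f s = 1" "?f 1 = 1" using v by auto
  consider "t \<le> 0" | "0 < t" "t < s" | "s \<le> t" "t < 1" | "1 \<le> t" by linarith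
  then show ?thesis
  proof cases
    case 1
    show ?thesis
    proof (cases "t = 0")
      case False
      then have "t < 0" using 1 by simp
      have "(s - t) * ?f 0 \<le> (s - 0) * ?f t + (0 - t) * ?f s"
        by (rule N_line_convex) (use \<open>t < 0\<close> s in auto)
      then have "s * 1 \<le> s * ?f t" using f0 by (simp add: algebra_simps)
      then show ?thesis using s by simp
    qed (use v in simp)
  next
    case 2
    have "(1 - t) * ?f s \<le> (1 - s) * ?f t + (s - t) * ?f 1"
      by (rule N_line_convex) (use 2 s in auto)
    then have "(1 - s) * 1 \<le> (1 - s) * ?f t" using f0 by (simp add: algebra_simps)
    then show ?thesis using s by simp
  next
    case 3
    show ?thesis
    proof (cases "t = s")
      case False
      then have "s < t" using 3 by simp
      have "(t - 0) * ?f s \<le> (t - s) * ?f 0 + (s - 0) * ?f t"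
        by (rule N_line_convex) (use \<open>s < t\<close> s in auto)
      then have "s * 1 \<le> s * ?f t" using f0 by (simp add: algebra_simps)
      then show ?thesis using s by simp
    qed (use v in simp)
  next
    case 4
    show ?thesis
    proof (cases "t = 1")
      case False
      then have "1 < t" using 4 by simp
      have "(t - s) * ?f 1 \<le> (t - 1) * ?f s + (1 - s) * ?f t"
        by (rule N_line_convex) (use \<open>1 < t\<close> s in auto)
      then have "(1 - s) * 1 \<le> (1 - s) * ?f t" using f0 by (simp add: algebra_simps)
      then show ?thesis using s by simp
    qed (use v in simp)
  qed
qed

lemma strict_convex: assumes H: isoR and p: "N p = 1" and q: "N q = 1" and pq: "p \<noteq> q"
  and l: "0 < l" "l < 1"
  shows "N (l *\<^sub>R p + (1 - l) *\<^sub>R q) < 1"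
proof (rule ccontr)
  define c where "c = l *\<^sub>R p + (1 - l) *\<^sub>R q"
  define w where "w = q - p"
  assume "\<not> N (l *\<^sub>R p + (1 - l) *\<^sub>R q) < 1"
  moreover have "N c \<le> 1"
  proof -
    have "N c \<le> l * N p + (1 - l) * N q" unfolding c_def using N_tri[of "l *\<^sub>R p"] N_scale l
      by (metis abs_of_nonneg less_eq_real_def diff_ge_0_iff_ge)
    then show ?thesis using p q by simp
  qed
  ultimately have c1: "N c = 1" unfolding c_def by linarith
  have w0: "w \<noteq> 0" using pq by (simp add: w_def)
  have cw: "c = p + (1 - l) *\<^sub>R w" by (simp add: c_def w_def algebra_simps)
  have pw: "p + w = q" by (simp add: w_def)
  have ge: "1 \<le> N (p + t *\<^sub>R w)" for t
    by (rule three_ge[of "1 - l"]) (use l p c1 cw q pw in auto)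
  have p0: "p \<noteq> 0" using p by auto
  have c0: "c \<noteq> 0" using c1 by auto
  have bp: "birkhoff_orth N p w" unfolding birkhoff_orth_def using p0 w0 ge p by auto
  have bc: "birkhoff_orth N c w" unfolding birkhoff_orth_def
  proof (intro conjI allI c0 w0)
    fix t
    have "c + t *\<^sub>R w = p + (1 - l + t) *\<^sub>R w" using cw by (simp add: algebra_simps)
    then show "N c \<le> N (c + t *\<^sub>R w)" using ge[of "1 - l + t"] c1 by simp
  qed
  have "det c p = 0" by (rule birk_unique[OF H birk_sym[OF H bc] birk_sym[OF H bp]])
  then have "(1 - l) * det q p = 0" by (simp add: c_def)
  then have "det q p = 0" using l by simp
  then obtain mu where mu: "q = mu *\<^sub>R p" using det_zero_par p0 by blast
  then have "\<bar>mu\<bar> = 1" using p q N_scale by simp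
  then have "mu = 1 \<or> mu = -1" by auto
  then show False
  proof
    assume "mu = 1" then show False using mu pq by simp
  next
    assume "mu = -1"
    then have "c = (l - (1 - l)) *\<^sub>R p" using mu by (simp add: c_def scaleR_diff_left two_scale)
    then have "N c = \<bar>l - (1 - l)\<bar>" using p N_scale by simp
    then show False using c1 l by auto
  qed
qed

lemma three_points: assumes H: isoR and a0: "a \<noteq> 0" and s: "s1 < s2" "s2 < s3"
  and v: "N (s1 *\<^sub>R a + b) = r" "N (s2 *\<^sub>R a + b) = r" "N (s3 *\<^sub>R a + b) = r"
  shows False
proof -
  have r0: "r \<noteq> 0"
  proof
    assume "r = 0"
    then have h: "s1 *\<^sub>R a + b = 0" "s3 *\<^sub>R a + b = 0" using v N_zero_iff by auto
    have "(s3 - s1) *\<^sub>R a = (s3 *\<^sub>R a + b) - (s1 *\<^sub>R a + b)" by (simp add: scaleR_diff_left)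
    then have "(s3 - s1) *\<^sub>R a = 0" using h by simp
    then show False using a0 s by simp
  qed
  then have rpos: "r > 0" using v N_nonneg by (metis less_eq_real_def)
  define P where "P s = (1 / r) *\<^sub>R (s *\<^sub>R a + b)" for s
  have NP: "N (P s1) = 1" "N (P s2) = 1" "N (P s3) = 1" using v rpos by (auto simp: P_def N_scale)
  have ne: "P s1 \<noteq> P s3"
  proof
    assume "P s1 = P s3"
    then have h: "s1 *\<^sub>R a + b = s3 *\<^sub>R a + b" using rpos by (simp add: P_def)
    have "(s3 - s1) *\<^sub>R a = (s3 *\<^sub>R a + b) - (s1 *\<^sub>R a + b)" by (simp add: scaleR_diff_left)
    then have "(s3 - s1) *\<^sub>R a = 0" using h by simp
    then show False using a0 s by simp
  qed
  define l where "l = (s3 - s2) / (s3 - s1)"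
  have l: "0 < l" "l < 1" using s by (auto simp: l_def field_simps)
  have ls: "l * (s3 - s1) = s3 - s2" using s by (simp add: l_def)
  have "l * s1 + (1 - l) * s3 = s3 - l * (s3 - s1)" by (simp add: algebra_simps)
  then have "l * s1 + (1 - l) * s3 = s2" using ls by simp
  have "l *\<^sub>R P s1 + (1 - l) *\<^sub>R P s3 = (1 / r) *\<^sub>R ((l * s1 + (1 - l) * s3) *\<^sub>R a + b)"
    unfolding P_def by (rule comb2)
  then have "l *\<^sub>R P s1 + (1 - l) *\<^sub>R P s3 = P s2" using \<open>l * s1 + (1 - l) * s3 = s2\<close> by (simp add: P_def)
  then show False using strict_convex[OF H NP(1) NP(3) ne l] NP(2) by simp
qed

end

lemma dbl_cancel: fixes a b :: "'a::real_vector" assumes "a + a = b + b" shows "a = b"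
proof -
  have "2 *\<^sub>R a = 2 *\<^sub>R b" using assms by (simp add: scaleR_2)
  then show ?thesis by simp
qed

lemma lin2: fixes x y :: "'a::real_vector"
  shows "c1 *\<^sub>R (p1 *\<^sub>R x + q1 *\<^sub>R y) + c2 *\<^sub>R (p2 *\<^sub>R x + q2 *\<^sub>R y)
     = (c1 * p1 + c2 * p2) *\<^sub>R x + (c1 * q1 + c2 * q2) *\<^sub>R y"
  by (simp add: algebra_simps)

lemma lin2m: fixes x y :: "'a::real_vector"
  shows "c1 *\<^sub>R (p1 *\<^sub>R x + q1 *\<^sub>R y) - c2 *\<^sub>R (p2 *\<^sub>R x + q2 *\<^sub>R y)
     = (c1 * p1 - c2 * p2) *\<^sub>R x + (c1 * q1 - c2 * q2) *\<^sub>R y"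
  by (simp add: algebra_simps)

context plane
begin

lemma bisector: assumes H: isoR and u: "N u = 1" and v: "N v = 1" and uv: "u \<noteq> v" "u \<noteq> - v"
  shows "birkhoff_orth N (u + v) (u - v)"
proof -
  define m where "m = u + v"
  have m0: "m \<noteq> 0" using uv(2) by (auto simp: m_def add_eq_0_iff)
  obtain y where bmy: "birkhoff_orth N m y" using birk_exists[OF m0] by blast
  have d: "det m y \<noteq> 0" by (rule birk_det[OF bmy])
  have y0: "y \<noteq> 0" using d by auto
  define al be where "al = det (u - v) y / det m y" and "be = det m (u - v) / det m y"
  have dd: "u - v = al *\<^sub>R m + be *\<^sub>R y" unfolding al_def be_def by (rule coords[OF d])
  have iso: "N (Tf m y z) = N z" for z by (rule isoR_D[OF H bmy])
  have u2: "(1 + al) *\<^sub>R m + be *\<^sub>R y = 2 *\<^sub>R u"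
  proof -
    have "(1 + al) *\<^sub>R m + be *\<^sub>R y = m + (al *\<^sub>R m + be *\<^sub>R y)" by (simp add: algebra_simps)
    also have "\<dots> = m + (u - v)" using dd by simp
    finally show ?thesis by (simp add: m_def scaleR_2)
  qed
  have v2: "(1 - al) *\<^sub>R m + (- be) *\<^sub>R y = 2 *\<^sub>R v"
  proof -
    have "(1 - al) *\<^sub>R m + (- be) *\<^sub>R y = m - (al *\<^sub>R m + be *\<^sub>R y)" by (simp add: algebra_simps)
    also have "\<dots> = m - (u - v)" using dd by simp
    finally show ?thesis by (simp add: m_def scaleR_2)
  qed
  have f1: "N ((1 + al) *\<^sub>R m + be *\<^sub>R y) = 2" using u2 u N_scale[of 2 u] by simp
  have f1': "N ((1 + al) *\<^sub>R m + (- be) *\<^sub>R y) = 2"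
  proof -
    have "Tf m y ((1 + al) *\<^sub>R m + be *\<^sub>R y) = (1 + al) *\<^sub>R m - be *\<^sub>R y" by (rule Tf_comb[OF d])
    then show ?thesis using iso[of "(1 + al) *\<^sub>R m + be *\<^sub>R y"] f1 by simp
  qed
  have f2': "N ((1 - al) *\<^sub>R m + (- be) *\<^sub>R y) = 2" using v2 v N_scale[of 2 v] by simp
  have f2: "N ((1 - al) *\<^sub>R m + be *\<^sub>R y) = 2"
  proof -
    have "Tf m y ((1 - al) *\<^sub>R m + (- be) *\<^sub>R y) = (1 - al) *\<^sub>R m - (- be) *\<^sub>R y" by (rule Tf_comb[OF d])
    then show ?thesis using iso[of "(1 - al) *\<^sub>R m + (- be) *\<^sub>R y"] f2' by simp
  qed
  have f3: "N ((al - 1) *\<^sub>R m + be *\<^sub>R y) = 2"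
  proof -
    have "(al - 1) *\<^sub>R m + be *\<^sub>R y = - ((1 - al) *\<^sub>R m + (- be) *\<^sub>R y)" by (simp add: algebra_simps)
    then show ?thesis using f2' by (metis N_minus)
  qed
  have f4: "N ((- 1 - al) *\<^sub>R m + be *\<^sub>R y) = 2"
  proof -
    have "(- 1 - al) *\<^sub>R m + be *\<^sub>R y = - ((1 + al) *\<^sub>R m + (- be) *\<^sub>R y)" by (simp add: algebra_simps)
    then show ?thesis using f1' by (metis N_minus)
  qed
  have al0: "al = 0"
  proof (rule ccontr)
    assume "al \<noteq> 0"
    then consider "al > 0" | "al < 0" by linarith
    then show False
    proof cases
      case 1
      show False by (rule three_points[OF H m0, of "- 1 - al" "1 - al" "1 + al" "be *\<^sub>R y" 2])
        (use 1 f4 f2 f1 in auto)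
    next
      case 2
      show False by (rule three_points[OF H m0, of "al - 1" "1 + al" "1 - al" "be *\<^sub>R y" 2])
        (use 2 f3 f1 f2 in auto)
    qed
  qed
  then have duv: "u - v = be *\<^sub>R y" using dd by simp
  have be0: "be \<noteq> 0" using duv uv(1) by auto
  have "birkhoff_orth N (1 *\<^sub>R m) (be *\<^sub>R y)" by (rule birk_scale[OF bmy]) (use be0 in auto)
  then show ?thesis using duv by (simp add: m_def)
qed

lemma swap_refl: assumes d: "det (u + v) (u - v) \<noteq> 0"
  shows "Tf (u + v) (u - v) u = v" "Tf (u + v) (u - v) v = u"
proof -
  let ?S = "Tf (u + v) (u - v)"
  have lin: "linear ?S" by (rule Tf_linear)
  have "?S (1 *\<^sub>R (u + v) + 1 *\<^sub>R (u - v)) = 1 *\<^sub>R (u + v) - 1 *\<^sub>R (u - v)" by (rule Tf_comb[OF d])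
  then have "?S (u + u) = v + v" by (simp add: algebra_simps)
  then have "?S u + ?S u = v + v" using linear_add[OF lin, of u u] by simp
  then show "?S u = v" by (rule dbl_cancel)
  have "?S (1 *\<^sub>R (u + v) + (-1) *\<^sub>R (u - v)) = 1 *\<^sub>R (u + v) - (-1) *\<^sub>R (u - v)" by (rule Tf_comb[OF d])
  then have "?S (v + v) = u + u" by (simp add: algebra_simps)
  then have "?S v + ?S v = u + u" using linear_add[OF lin, of v v] by simp
  then show "?S v = u" by (rule dbl_cancel)
qed

definition Jf :: "'a \<Rightarrow> 'a \<Rightarrow> 'a \<Rightarrow> 'a" where
  "Jf x y z = (det z y / det x y) *\<^sub>R y - (det x z / det x y) *\<^sub>R x"

lemma Jf_linear: "linear (Jf x y)"
  by (rule linearI) (auto simp: Jf_def algebra_simps scaleR_add_left add_divide_distrib)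

lemma Jf_x: "det x y \<noteq> 0 \<Longrightarrow> Jf x y x = y" by (simp add: Jf_def)
lemma Jf_y: "det x y \<noteq> 0 \<Longrightarrow> Jf x y y = - x" by (simp add: Jf_def)

lemma Jf_comb: assumes "det x y \<noteq> 0" shows "Jf x y (a *\<^sub>R x + b *\<^sub>R y) = (- b) *\<^sub>R x + a *\<^sub>R y"
proof -
  have "Jf x y (a *\<^sub>R x + b *\<^sub>R y) = a *\<^sub>R Jf x y x + b *\<^sub>R Jf x y y"
    using Jf_linear[of x y] by (simp add: linear_add linear_scale)
  then show ?thesis using Jf_x[OF assms] Jf_y[OF assms] by simp
qed

lemma Jf_invol: assumes d: "det x y \<noteq> 0" shows "Jf x y (Jf x y z) = - z"
proof -
  have "(\<lambda>z. Jf x y (Jf x y z)) = (\<lambda>z. - z)"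
  proof (rule linear_eq_on_basis[OF d])
    show "linear (\<lambda>z. Jf x y (Jf x y z))"
      using linear_compose[OF Jf_linear[of x y] Jf_linear[of x y]] by (simp add: o_def)
    show "linear (\<lambda>z. - z)" by (rule linear_uminus)
    show "Jf x y (Jf x y x) = - x" using Jf_x[OF d] Jf_y[OF d] by simp
    show "Jf x y (Jf x y y) = - y"
      using Jf_x[OF d] Jf_y[OF d] linear_neg[OF Jf_linear, of x y x] by simp
  qed
  then show ?thesis by metis
qed

lemma Jf_iso: assumes H: isoR and b: "birkhoff_orth N x y" and x1: "N x = 1" and y1: "N y = 1"
  shows "N (Jf x y z) = N z"
proof -
  have d: "det x y \<noteq> 0" by (rule birk_det[OF b])
  have "x \<noteq> y" using d by auto
  moreover have "x \<noteq> - y" using d by auto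
  ultimately have b0: "birkhoff_orth N (x + y) (x - y)" by (rule bisector[OF H x1 y1])
  have d0: "det (x + y) (x - y) \<noteq> 0" by (rule birk_det[OF b0])
  let ?S = "Tf (x + y) (x - y)"
  have "Jf x y = (\<lambda>z. ?S (Tf x y z))"
  proof (rule linear_eq_on_basis[OF d])
    show "linear (Jf x y)" by (rule Jf_linear)
    show "linear (\<lambda>z. ?S (Tf x y z))"
      using linear_compose[OF Tf_linear[of x y] Tf_linear[of "x + y" "x - y"]] by (simp add: o_def)
    show "Jf x y x = ?S (Tf x y x)" using Jf_x[OF d] Tf_x[OF d] swap_refl[OF d0] by simp
    show "Jf x y y = ?S (Tf x y y)" using Jf_y[OF d] Tf_y[OF d] swap_refl[OF d0]
        linear_neg[OF Tf_linear, of "x + y" "x - y" y] by simp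
  qed
  then show ?thesis using isoR_D[OF H b0] isoR_D[OF H b] by simp
qed

lemma Jf_det: assumes d: "det x y \<noteq> 0" and u0: "u \<noteq> 0" shows "det u (Jf x y u) \<noteq> 0"
proof
  assume "det u (Jf x y u) = 0"
  then have "det (Jf x y u) u = 0" using det_swap[of "Jf x y u" u] by simp
  then obtain c where c: "Jf x y u = c *\<^sub>R u" using det_zero_par u0 by blast
  have "Jf x y (Jf x y u) = Jf x y (c *\<^sub>R u)" using c by simp
  also have "\<dots> = c *\<^sub>R Jf x y u" using Jf_linear[of x y] by (simp add: linear_scale)
  also have "\<dots> = (c * c) *\<^sub>R u" using c by simp
  finally have "- u = (c * c) *\<^sub>R u" using Jf_invol[OF d, of u] by simp
  then have "(c * c + 1) *\<^sub>R u = 0" by (metis add.commute neg_eq_iff_add_eq_0 scaleR_add_left scaleR_one)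
  moreover have "c * c + 1 \<noteq> 0" by (metis add_nonneg_pos zero_le_square zero_less_one not_less_iff_gr_or_eq)
  ultimately show False using u0 by simp
qed

lemma birk_J: assumes H: isoR and b: "birkhoff_orth N x y" and x1: "N x = 1" and y1: "N y = 1"
  and u0: "u \<noteq> 0"
  shows "birkhoff_orth N u (Jf x y u)"
proof -
  have d: "det x y \<noteq> 0" by (rule birk_det[OF b])
  define u' where "u' = (1 / N u) *\<^sub>R u"
  have u'1: "N u' = 1" unfolding u'_def by (rule normalize_S[OF u0])
  have u'0: "u' \<noteq> 0" using u'1 by auto
  let ?J = "Jf x y"
  have J1: "N (?J u') = 1" using Jf_iso[OF H b x1 y1] u'1 by simp
  have du: "det u' (?J u') \<noteq> 0" by (rule Jf_det[OF d u'0])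
  have ne1: "u' \<noteq> ?J u'" using du by auto
  have ne2: "u' \<noteq> - ?J u'"
  proof
    assume "u' = - ?J u'"
    then have "det u' (?J u') = - det (?J u') (?J u')" by (metis det_simps(8))
    then show False using du by simp
  qed
  have bb: "birkhoff_orth N (u' + ?J u') (u' - ?J u')" by (rule bisector[OF H u'1 J1 ne1 ne2])
  have db: "det (u' + ?J u') (u' - ?J u') \<noteq> 0" by (rule birk_det[OF bb])
  let ?B = "Tf (u' + ?J u') (u' - ?J u')"
  have "Txy u' (?J u') = (\<lambda>z. ?B (?J z))"
  proof (rule Txy_char[OF du])
    show "linear (\<lambda>z. ?B (?J z))"
      using linear_compose[OF Jf_linear[of x y] Tf_linear[of "u' + ?J u'" "u' - ?J u'"]] by (simp add: o_def)
    show "?B (?J u') = u'" using swap_refl[OF db] by simp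
    show "?B (?J (?J u')) = - ?J u'" using swap_refl[OF db] Jf_invol[OF d]
        linear_neg[OF Tf_linear, of "u' + ?J u'" "u' - ?J u'" u'] by simp
  qed
  then have "Tf u' (?J u') = (\<lambda>z. ?B (?J z))" using Txy_Tf[OF du] by simp
  then have "N (Tf u' (?J u') z) = N z" for z
    using isoR_D[OF H bb] Jf_iso[OF H b x1 y1] by simp
  then have b': "birkhoff_orth N u' (?J u')" by (rule iso_birk[OF du])
  have Nu: "N u \<noteq> 0" using u0 N_zero_iff by simp
  have "birkhoff_orth N (N u *\<^sub>R u') (N u *\<^sub>R ?J u')" by (rule birk_scale[OF b' Nu Nu])
  moreover have "N u *\<^sub>R u' = u" using Nu by (simp add: u'_def)
  moreover have "N u *\<^sub>R ?J u' = ?J u" using Jf_linear[of x y] \<open>N u *\<^sub>R u' = u\<close>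
    by (metis linear_scale)
  ultimately show ?thesis by simp
qed

end

lemma coef1: fixes a b :: real assumes "a*a + b*b = 1" "1 + a > 0"
  shows "(1/2)*(1+a) + (- b/(2*(1+a))) * (- b) = 1"
proof -
  have "(1/2)*(1+a) + (- b/(2*(1+a))) * (- b) = ((1+a)*(1+a) + b*b) / (2*(1+a))"
    using assms(2) by (simp add: field_simps)
  also have "(1+a)*(1+a) + b*b = 2*(1+a)" using assms(1) by (simp add: algebra_simps)
  finally show ?thesis using assms(2) by simp
qed
lemma coef2: fixes a b :: real assumes "1 + a > 0"
  shows "(1/2)*b + (- b/(2*(1+a))) * (1+a) = 0"
  using assms by (simp add: field_simps)
lemma coef3: fixes a b :: real assumes "a*a + b*b = 1" "1 + a > 0"
  shows "(1/2)*(1+a) - (- b/(2*(1+a))) * (- b) = a"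
proof -
  have "(1/2)*(1+a) - (- b/(2*(1+a))) * (- b) = ((1+a)*(1+a) - b*b) / (2*(1+a))"
    using assms(2) by (simp add: field_simps)
  also have "(1+a)*(1+a) - b*b = a * (2*(1+a))" using assms(1) by (simp add: algebra_simps)
  finally show ?thesis using assms(2) by simp
qed
lemma coef4: fixes a b :: real assumes "1 + a > 0"
  shows "(1/2)*b - (- b/(2*(1+a))) * (1+a) = b"
  using assms by (simp add: field_simps)
lemma sq1: fixes a b :: real assumes "a*a + b*b = 1" shows "-1 \<le> a"
proof (rule ccontr)
  assume "\<not> -1 \<le> a" then have "a < -1" by simp
  then have "1 < (-a) * (-a)" using less_1_mult[of "-a" "-a"] by simp
  then show False using assms zero_le_square[of b] by simp
qed

context plane
begin

lemma unit_Q: assumes H: isoR and b: "birkhoff_orth N x y" and x1: "N x = 1" and y1: "N y = 1"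
  and ab: "a * a + b * b = 1"
  shows "N (a *\<^sub>R x + b *\<^sub>R y) = 1"
proof (cases "a = -1")
  case True
  then have "b * b = 0" using ab by simp
  then have "b = 0" by simp
  then show ?thesis using True x1 by simp
next
  case False
  have d: "det x y \<noteq> 0" by (rule birk_det[OF b])
  have a1: "1 + a > 0" using sq1[OF ab] False by simp
  define e where "e = (1 + a) *\<^sub>R x + b *\<^sub>R y"
  have Je: "Jf x y e = (- b) *\<^sub>R x + (1 + a) *\<^sub>R y" unfolding e_def by (rule Jf_comb[OF d])
  have e0: "e \<noteq> 0"
  proof
    assume "e = 0"
    then have "(1 + a) *\<^sub>R x + b *\<^sub>R y = 0 *\<^sub>R x + 0 *\<^sub>R y" by (simp add: e_def)
    then show False using coords_unique[OF d] a1 by fastforce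
  qed
  have be: "birkhoff_orth N e (Jf x y e)" by (rule birk_J[OF H b x1 y1 e0])
  have de: "det e (Jf x y e) \<noteq> 0" by (rule birk_det[OF be])
  define dl where "dl = - b / (2 * (1 + a))"
  have hx: "(1/2) *\<^sub>R e + dl *\<^sub>R Jf x y e = x"
  proof -
    have "(1/2) *\<^sub>R e + dl *\<^sub>R Jf x y e
        = ((1/2) * (1 + a) + dl * (- b)) *\<^sub>R x + ((1/2) * b + dl * (1 + a)) *\<^sub>R y"
      by (subst Je, unfold e_def, rule lin2)
    also have "\<dots> = x" using coef1[OF ab a1] coef2[OF a1] by (simp add: dl_def)
    finally show ?thesis .
  qed
  have hR: "Tf e (Jf x y e) x = a *\<^sub>R x + b *\<^sub>R y"
  proof -
    have "Tf e (Jf x y e) x = Tf e (Jf x y e) ((1/2) *\<^sub>R e + dl *\<^sub>R Jf x y e)" using hx by simp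
    also have "\<dots> = (1/2) *\<^sub>R e - dl *\<^sub>R Jf x y e" by (rule Tf_comb[OF de])
    also have "\<dots> = ((1/2) * (1 + a) - dl * (- b)) *\<^sub>R x + ((1/2) * b - dl * (1 + a)) *\<^sub>R y"
      by (subst Je, unfold e_def, rule lin2m)
    also have "\<dots> = a *\<^sub>R x + b *\<^sub>R y" using coef3[OF ab a1] coef4[OF a1] by (simp add: dl_def)
    finally show ?thesis .
  qed
  show ?thesis using isoR_D[OF H be, of x] hR x1 by simp
qed

lemma isoR_inner: assumes H: isoR shows "inner_product_norm N"
proof -
  define x where "x = (1 / N e1) *\<^sub>R e1"
  have x1: "N x = 1" unfolding x_def by (rule normalize_S) simp
  have x0: "x \<noteq> 0" using x1 by auto
  obtain y0 where b0: "birkhoff_orth N x y0" using birk_exists[OF x0] by blast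
  have y00: "y0 \<noteq> 0" using birk_ne[OF b0] by simp
  define y where "y = (1 / N y0) *\<^sub>R y0"
  have y1: "N y = 1" unfolding y_def by (rule normalize_S[OF y00])
  have "birkhoff_orth N (1 *\<^sub>R x) ((1 / N y0) *\<^sub>R y0)"
    by (rule birk_scale[OF b0]) (use y00 N_zero_iff in auto)
  then have b: "birkhoff_orth N x y" by (simp add: y_def)
  have d: "det x y \<noteq> 0" by (rule birk_det[OF b])
  define al where "al z = det z y / det x y" for z
  define be where "be z = det x z / det x y" for z
  define B where "B p q = al p * al q + be p * be q" for p q
  have zc: "z = al z *\<^sub>R x + be z *\<^sub>R y" for z unfolding al_def be_def by (rule coords[OF d])
  have al_add: "al (p + q) = al p + al q" for p q by (simp add: al_def add_divide_distrib)
  have be_add: "be (p + q) = be p + be q" for p q by (simp add: be_def add_divide_distrib)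
  have al_sc: "al (c *\<^sub>R p) = c * al p" for c p by (simp add: al_def)
  have be_sc: "be (c *\<^sub>R p) = c * be p" for c p by (simp add: be_def)
  have Nz: "N z = sqrt (B z z)" for z
  proof (cases "z = 0")
    case True then show ?thesis by (simp add: B_def al_def be_def)
  next
    case False
    define r where "r = sqrt (al z * al z + be z * be z)"
    have nz: "al z \<noteq> 0 \<or> be z \<noteq> 0" using zc[of z] False by auto
    then have pos: "al z * al z + be z * be z > 0" by (metis add_pos_nonneg add_nonneg_pos not_real_square_gt_zero zero_le_square)
    then have r0: "r > 0" by (simp add: r_def)
    have rr: "r * r = al z * al z + be z * be z" using pos by (simp add: r_def)
    define a b where "a = al z / r" and "b = be z / r"
    have "a * a + b * b = (al z * al z + be z * be z) / (r * r)" by (simp add: a_def b_def add_divide_distrib)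
    then have ab: "a * a + b * b = 1" using rr pos nz by simp
    have "z = r *\<^sub>R (a *\<^sub>R x + b *\<^sub>R y)" using r0 zc[of z] by (simp add: a_def b_def scaleR_add_right)
    then have "N z = r * N (a *\<^sub>R x + b *\<^sub>R y)" using r0 N_scale by simp
    also have "N (a *\<^sub>R x + b *\<^sub>R y) = 1" by (rule unit_Q[OF H b x1 y1 ab])
    finally show ?thesis by (simp add: r_def B_def)
  qed
  show ?thesis unfolding inner_product_norm_def
  proof (intro exI[of _ B] conjI allI impI)
    fix p q z :: 'a and c :: real
    show "B (p + q) z = B p z + B q z" by (simp add: B_def al_add be_add algebra_simps)
    show "B (c *\<^sub>R p) q = c * B p q" by (simp add: B_def al_sc be_sc algebra_simps)
    show "B p q = B q p" by (simp add: B_def mult.commute)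
    show "N z = sqrt (B z z)" by (rule Nz)
  next
    fix z :: 'a assume "z \<noteq> 0"
    then have "al z \<noteq> 0 \<or> be z \<noteq> 0" using zc[of z] by auto
    then show "B z z > 0" unfolding B_def
      by (metis add_pos_nonneg add_nonneg_pos not_real_square_gt_zero zero_le_square)
  qed
qed

end

context plane
begin

lemma Tf_fix_unit: assumes d: "det x y \<noteq> 0" and x0: "x \<noteq> 0"
  shows "Tf x y ((1 / N x) *\<^sub>R x) = (1 / N x) *\<^sub>R x" "(1 / N x) *\<^sub>R x \<in> unit_circle N"
proof -
  show "Tf x y ((1 / N x) *\<^sub>R x) = (1 / N x) *\<^sub>R x"
    using Tf_linear[of x y] Tf_x[OF d] by (simp add: linear_scale)
  show "(1 / N x) *\<^sub>R x \<in> unit_circle N" using normalize_S[OF x0] in_S by simp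
qed

lemma unit_to_all: assumes "\<And>z. N z = 1 \<Longrightarrow> N (Tf x y z) = 1" shows "N (Tf x y z) = N z"
proof (cases "z = 0")
  case True then show ?thesis using Tf_linear[of x y] by (simp add: linear_0)
next
  case False
  define z' where "z' = (1 / N z) *\<^sub>R z"
  have z'1: "N z' = 1" unfolding z'_def by (rule normalize_S[OF False])
  have Nz: "N z \<noteq> 0" using False N_zero_iff by simp
  have "z = N z *\<^sub>R z'" using Nz by (simp add: z'_def)
  then have "Tf x y z = N z *\<^sub>R Tf x y z'" using Tf_linear[of x y] by (metis linear_scale)
  then show ?thesis using assms[OF z'1] N_scale N_nonneg[of z] by simp
qed

lemma cS0_isoR: assumes c0: "cS N = 0" shows isoR
  unfolding isoR_def
proof (intro allI impI)
  fix x y assume b: "birkhoff_orth N x y"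
  have d: "det x y \<noteq> 0" by (rule birk_det[OF b])
  have T: "Txy x y = Tf x y" by (rule Txy_Tf[OF d])
  have x0: "x \<noteq> 0" using birk_ne[OF b] by simp
  have "trm x y \<le> cS N" using cSUP_upper[OF _ trm_bdd, of "(x, y)"] b by (simp add: cS_eq)
  then have t0: "trm x y = 0" using trm_bounds(1)[OF b] c0 by simp
  let ?A = "Txy x y ` unit_circle N"
  have eq: "(SUP w\<in>?A. N w) = (INF w\<in>?A. N w)" using t0 by (simp add: trm_def)
  have val: "N w = (SUP w\<in>?A. N w)" if w: "w \<in> ?A" for w
  proof -
    have "(INF w\<in>?A. N w) \<le> N w" by (rule cINF_lower[OF T_bdd(2)[OF b] w])
    moreover have "N w \<le> (SUP w\<in>?A. N w)" by (rule cSUP_upper[OF w T_bdd(1)[OF b]])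
    ultimately show ?thesis using eq by simp
  qed
  have "(1 / N x) *\<^sub>R x \<in> ?A" using Tf_fix_unit[OF d x0] T by (metis image_eqI)
  then have s1: "(SUP w\<in>?A. N w) = 1" using val normalize_S[OF x0] by metis
  have "N (Tf x y z) = 1" if "N z = 1" for z
  proof -
    have "Tf x y z \<in> ?A" using that T in_S by auto
    then show ?thesis using val s1 by simp
  qed
  then show "N (Tf x y z) = N z" for z using unit_to_all by blast
qed

lemma iso_trm0: assumes b: "birkhoff_orth N x y" and iso: "\<And>z. N (Tf x y z) = N z"
  shows "trm x y = 0"
proof -
  have d: "det x y \<noteq> 0" by (rule birk_det[OF b])
  have T: "Txy x y = Tf x y" by (rule Txy_Tf[OF d])
  let ?A = "Txy x y ` unit_circle N"
  have v: "N w = 1" if "w \<in> ?A" for w using that T iso in_S by auto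
  have "(SUP w\<in>?A. N w) = (SUP w\<in>?A. 1)" by (rule SUP_cong) (auto simp: v)
  moreover have "(INF w\<in>?A. N w) = (INF w\<in>?A. 1)" by (rule INF_cong) (auto simp: v)
  ultimately show ?thesis using T_ne[of x y] by (simp add: trm_def)
qed

lemma inner_cS0: assumes ip: "inner_product_norm N" shows "cS N = 0"
proof -
  obtain B :: "'a \<Rightarrow> 'a \<Rightarrow> real" where
    Badd: "\<And>x y z. B (x + y) z = B x z + B y z" and
    Bsc: "\<And>c x y. B (c *\<^sub>R x) y = c * B x y" and
    Bsym: "\<And>x y. B x y = B y x" and
    Bpos: "\<And>x. x \<noteq> 0 \<Longrightarrow> B x x > 0" and
    BN: "\<And>x. N x = sqrt (B x x)"
    using ip unfolding inner_product_norm_def by blast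
  have Badd2: "B z (x + y) = B z x + B z y" for x y z using Badd Bsym by metis
  have Bsc2: "B x (c *\<^sub>R y) = c * B x y" for c x y using Bsc Bsym by metis
  have B0: "B 0 z = 0" for z using Bsc[of 0 z z] by simp
  have Bnn: "B z z \<ge> 0" for z using Bpos[of z] B0[of 0] by (cases "z = 0") auto
  have NB: "N z * N z = B z z" for z using BN Bnn by simp
  have exp: "B (a *\<^sub>R p + b *\<^sub>R q) (a *\<^sub>R p + b *\<^sub>R q) = a * a * B p p + 2 * a * b * B p q + b * b * B q q"
    for a b p q by (simp add: Badd Badd2 Bsc Bsc2 Bsym[of q p] algebra_simps)
  have orth: "B x y = 0" if b: "birkhoff_orth N x y" for x y
  proof -
    have y0: "y \<noteq> 0" using birk_ne[OF b] by simp
    have byy: "B y y > 0" by (rule Bpos[OF y0])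
    define t where "t = - B x y / B y y"
    have "N x \<le> N (x + t *\<^sub>R y)" by (rule birk_le[OF b])
    then have "N x * N x \<le> N (x + t *\<^sub>R y) * N (x + t *\<^sub>R y)"
      using N_nonneg by (intro mult_mono) auto
    then have "B x x \<le> B (1 *\<^sub>R x + t *\<^sub>R y) (1 *\<^sub>R x + t *\<^sub>R y)" by (simp add: NB)
    also have "\<dots> = B x x + 2 * t * B x y + t * t * B y y" using exp[where a=1 and b=t and p=x and q=y] by simp
    finally have "0 \<le> 2 * t * B x y + t * t * B y y" by simp
    also have "2 * t * B x y + t * t * B y y = - (B x y * B x y) / B y y"
      using byy by (simp add: t_def field_simps)
    finally have "B x y * B x y \<le> 0" using byy by (simp add: divide_nonpos_pos field_simps)
    then show ?thesis by (simp add: mult_le_0_iff) linarith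
  qed
  have iso: "N (Tf x y z) = N z" if b: "birkhoff_orth N x y" for x y z
  proof -
    have d: "det x y \<noteq> 0" by (rule birk_det[OF b])
    define a c where "a = det z y / det x y" and "c = det x z / det x y"
    have z: "z = a *\<^sub>R x + c *\<^sub>R y" unfolding a_def c_def by (rule coords[OF d])
    have Tz: "Tf x y z = a *\<^sub>R x + (- c) *\<^sub>R y" using Tf_comb[OF d, of a c] z by simp
    have "B (Tf x y z) (Tf x y z) = B (a *\<^sub>R x + (- c) *\<^sub>R y) (a *\<^sub>R x + (- c) *\<^sub>R y)"
      by (simp only: Tz)
    also have "\<dots> = a * a * B x x + 2 * a * (- c) * B x y + (- c) * (- c) * B y y" by (rule exp)
    also have "\<dots> = a * a * B x x + 2 * a * c * B x y + c * c * B y y" using orth[OF b] by simp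
    also have "\<dots> = B (a *\<^sub>R x + c *\<^sub>R y) (a *\<^sub>R x + c *\<^sub>R y)" by (rule exp[symmetric])
    also have "\<dots> = B z z" using z by simp
    finally have "B (Tf x y z) (Tf x y z) = B z z" .
    then show ?thesis using BN by simp
  qed
  have "cS N = (SUP p \<in> {(x, y). birkhoff_orth N x y}. (0::real))"
    unfolding cS_eq by (rule SUP_cong) (auto intro!: iso_trm0 iso)
  then show ?thesis using P_ne by simp
qed

end

context plane
begin

definition K :: "'a set" where "K = {z. N z \<le> 1}"

lemma K_closed: "closed K"
proof -
  have "K = N -` {..1}" by (auto simp: K_def)
  then show ?thesis using continuous_closed_vimage[of "{..1}" N] N_isCont by auto
qed

lemma K_bounded: "bounded K"
proof -
  obtain m where m: "m > 0" "\<forall>p. m * norm p \<le> N p" using N_lower by blast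
  show ?thesis unfolding bounded_iff
  proof (intro exI ballI)
    fix z assume "z \<in> K"
    then have "m * norm z \<le> 1" using m(2)[rule_format, of z] by (auto simp: K_def)
    then show "norm z \<le> 1/m" using m by (simp add: field_simps)
  qed
qed

lemma K_convex: "convex K"
proof (rule convexI)
  fix x y :: 'a and u v :: real
  assume xy: "x \<in> K" "y \<in> K" and uv: "0 \<le> u" "0 \<le> v" "u + v = 1"
  have "N (u *\<^sub>R x + v *\<^sub>R y) \<le> N (u *\<^sub>R x) + N (v *\<^sub>R y)" by (rule N_tri)
  also have "\<dots> = u * N x + v * N y" using uv by (simp add: N_scale)
  also have "\<dots> \<le> u * 1 + v * 1" using xy uv by (intro add_mono mult_left_mono) (auto simp: K_def)
  finally show "u *\<^sub>R x + v *\<^sub>R y \<in> K" using uv by (simp add: K_def)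
qed

lemma frontier_K: "frontier K = unit_circle N"
proof -
  have int: "interior K = U"
  proof
    show "U \<subseteq> interior K" by (rule interior_maximal) (use U_open in \<open>auto simp: U_def K_def\<close>)
    show "interior K \<subseteq> U"
    proof
      fix z assume z: "z \<in> interior K"
      then obtain e where e: "e > 0" "ball z e \<subseteq> K" using open_contains_ball open_interior
        by (metis interior_subset subset_trans)
      show "z \<in> U"
      proof (rule ccontr)
        assume "z \<notin> U"
        moreover have "N z \<le> 1" using z interior_subset[of K] by (auto simp: K_def)
        ultimately have z1: "N z = 1" by (simp add: U_def)
        then have z0: "z \<noteq> 0" by auto
        define w where "w = (1 + e / (2 * norm z)) *\<^sub>R z"
        have "dist z w = e / 2" using z0 e by (simp add: w_def dist_norm algebra_simps)
        then have "w \<in> ball z e" using e by simp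
        then have "N w \<le> 1" using e by (auto simp: K_def)
        moreover have "N w = 1 + e / (2 * norm z)" using z1 e z0 by (simp add: w_def N_scale)
        moreover have "e / (2 * norm z) > 0" using e z0 by simp
        ultimately show False by simp
      qed
    qed
  qed
  show ?thesis unfolding frontier_def using K_closed int
    by (auto simp: K_def U_def unit_circle_def)
qed

lemma closed_sub: fixes A B :: "'a set"
  assumes "closed A" "bounded A" "convex B" "frontier A \<subseteq> B" shows "A \<subseteq> B"
proof
  fix z assume z: "z \<in> A"
  show "z \<in> B"
  proof (cases "z \<in> interior A")
    case False
    then have "z \<in> frontier A" using z assms(1) by (simp add: frontier_def)
    then show ?thesis using assms(4) by auto
  next
    case True
    obtain d1 where d1: "0 < d1" "z + d1 *\<^sub>R e1 \<in> frontier A"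
      using ray_to_frontier[OF assms(2) True, of e1] by auto
    obtain d2 where d2: "0 < d2" "z + d2 *\<^sub>R (- e1) \<in> frontier A"
      using ray_to_frontier[OF assms(2) True, of "- e1"] by auto
    have p1: "z + d1 *\<^sub>R e1 \<in> B" and p2: "z + d2 *\<^sub>R (- e1) \<in> B" using d1 d2 assms(4) by auto
    define a where "a = d2 / (d1 + d2)"
    define b where "b = d1 / (d1 + d2)"
    have ab1: "a + b = 1" using d1 d2 by (simp add: a_def b_def add_divide_distrib[symmetric])
    have ab: "0 \<le> a" "0 \<le> b" "a + b = 1" using d1 d2 ab1 by (simp_all add: a_def b_def)
    have "a *\<^sub>R (z + d1 *\<^sub>R e1) + b *\<^sub>R (z + d2 *\<^sub>R (- e1)) = (a + b) *\<^sub>R z + (a * d1 - b * d2) *\<^sub>R e1"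
      by (simp add: algebra_simps)
    also have "a * d1 - b * d2 = 0" by (simp add: a_def b_def field_simps)
    finally have "a *\<^sub>R (z + d1 *\<^sub>R e1) + b *\<^sub>R (z + d2 *\<^sub>R (- e1)) = z" using ab by simp
    then show ?thesis using convexD[OF assms(3) p1 p2 ab] by simp
  qed
qed

lemma K_eq: assumes "compact P" "convex P" "frontier P = unit_circle N" shows "P = K"
proof
  show "P \<subseteq> K"
    by (rule closed_sub) (use assms compact_imp_closed compact_imp_bounded K_convex in \<open>auto simp: K_def unit_circle_def\<close>)
  have "frontier K \<subseteq> P" using frontier_K assms(3) frontier_subset_closed[of P] compact_imp_closed[OF assms(1)] by auto
  then show "K \<subseteq> P" by (rule closed_sub[OF K_closed K_bounded assms(2)])
qed

lemma indep_det: assumes "independent {u, v}" "u \<noteq> v" shows "det u v \<noteq> 0"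
proof
  assume d: "det u v = 0"
  have v0: "v \<noteq> 0" using assms(1) dependent_zero by blast
  obtain k where "u = k *\<^sub>R v" using det_zero_par[OF d v0] by blast
  then have "u \<in> span {v}" by (simp add: span_base span_scale)
  then show False using assms independent_insert[of u "{v}"] by auto
qed

lemma det_indep: assumes "det u v \<noteq> 0" shows "independent {u, v}" "u \<noteq> v"
proof -
  show "u \<noteq> v" using assms by auto
  have v0: "v \<noteq> 0" using assms by auto
  have "u \<notin> span {v}"
  proof
    assume "u \<in> span {v}"
    then obtain k where "u = k *\<^sub>R v" by (auto simp: span_singleton)
    then show False using assms by simp
  qed
  then show "independent {u, v}" using independent_insert[of u "{v}"] v0 \<open>u \<noteq> v\<close> by auto
qed

end

context plane
begin

definition Qp :: "'a \<Rightarrow> 'a \<Rightarrow> 'a \<Rightarrow> 'a set" where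
  "Qp c u v = {c + s *\<^sub>R u + t *\<^sub>R v | s t. 0 \<le> s \<and> s \<le> 1 \<and> 0 \<le> t \<and> t \<le> 1}"

lemma cc_bounds: fixes a b s1 s2 :: real
  assumes "0 \<le> a" "0 \<le> b" "a + b = 1" "0 \<le> s1" "s1 \<le> 1" "0 \<le> s2" "s2 \<le> 1"
  shows "0 \<le> a * s1 + b * s2" "a * s1 + b * s2 \<le> 1"
proof -
  show "0 \<le> a * s1 + b * s2" using assms by simp
  have "a * s1 \<le> a * 1" "b * s2 \<le> b * 1" using assms by (intro mult_left_mono; simp)+
  then show "a * s1 + b * s2 \<le> 1" using assms by simp
qed

lemma Qp_convex: "convex (Qp c u v)"
proof (rule convexI)
  fix x y and a b :: real
  assume x: "x \<in> Qp c u v" and y: "y \<in> Qp c u v" and ab: "0 \<le> a" "0 \<le> b" "a + b = 1"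
  obtain s1 t1 where st1: "x = c + s1 *\<^sub>R u + t1 *\<^sub>R v" "0 \<le> s1" "s1 \<le> 1" "0 \<le> t1" "t1 \<le> 1"
    using x by (auto simp: Qp_def)
  obtain s2 t2 where st2: "y = c + s2 *\<^sub>R u + t2 *\<^sub>R v" "0 \<le> s2" "s2 \<le> 1" "0 \<le> t2" "t2 \<le> 1"
    using y by (auto simp: Qp_def)
  have "a *\<^sub>R x + b *\<^sub>R y = c + (a * s1 + b * s2) *\<^sub>R u + (a * t1 + b * t2) *\<^sub>R v"
  proof -
    have b1: "b = 1 - a" using ab(3) by simp
    show ?thesis unfolding st1(1) st2(1) b1
      by (rule vec_eqI) (simp_all add: inner_add_left algebra_simps)
  qed
  moreover note cc_bounds[OF ab st1(2,3) st2(2,3)] cc_bounds[OF ab st1(4,5) st2(4,5)]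
  ultimately show "a *\<^sub>R x + b *\<^sub>R y \<in> Qp c u v" unfolding Qp_def by blast
qed

lemma hull_Qp: "convex hull {c, c + u, c + u + v, c + v} = Qp c u v"
proof
  show "convex hull {c, c + u, c + u + v, c + v} \<subseteq> Qp c u v"
  proof (rule hull_minimal[where S=convex, OF _ Qp_convex])
    have "c = c + 0 *\<^sub>R u + 0 *\<^sub>R v" "c + u = c + 1 *\<^sub>R u + 0 *\<^sub>R v"
      "c + u + v = c + 1 *\<^sub>R u + 1 *\<^sub>R v" "c + v = c + 0 *\<^sub>R u + 1 *\<^sub>R v" by simp_all
    then show "{c, c + u, c + u + v, c + v} \<subseteq> Qp c u v" unfolding Qp_def
      by (smt (verit, best) empty_subsetI insert_subset mem_Collect_eq)
  qed
  show "Qp c u v \<subseteq> convex hull {c, c + u, c + u + v, c + v}"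
  proof
    fix z assume "z \<in> Qp c u v"
    then obtain s t where st: "z = c + s *\<^sub>R u + t *\<^sub>R v" "0 \<le> s" "s \<le> 1" "0 \<le> t" "t \<le> 1"
      by (auto simp: Qp_def)
    let ?H = "convex hull {c, c + u, c + u + v, c + v}"
    have pts: "c \<in> ?H" "c + u \<in> ?H" "c + u + v \<in> ?H" "c + v \<in> ?H"
      by (simp_all add: hull_inc)
    have p1: "(1 - s) *\<^sub>R c + s *\<^sub>R (c + u) \<in> ?H"
      by (rule convexD[OF convex_convex_hull pts(1) pts(2)]) (use st in auto)
    have p2: "(1 - s) *\<^sub>R (c + v) + s *\<^sub>R (c + u + v) \<in> ?H"
      by (rule convexD[OF convex_convex_hull pts(4) pts(3)]) (use st in auto)
    have "(1 - t) *\<^sub>R ((1 - s) *\<^sub>R c + s *\<^sub>R (c + u)) + t *\<^sub>R ((1 - s) *\<^sub>R (c + v) + s *\<^sub>R (c + u + v)) \<in> ?H"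
      by (rule convexD[OF convex_convex_hull p1 p2]) (use st in auto)
    moreover have "(1 - t) *\<^sub>R ((1 - s) *\<^sub>R c + s *\<^sub>R (c + u)) + t *\<^sub>R ((1 - s) *\<^sub>R (c + v) + s *\<^sub>R (c + u + v)) = z"
      unfolding st(1) by (rule vec_eqI) (simp_all add: inner_add_left algebra_simps)
    ultimately show "z \<in> ?H" by simp
  qed
qed

lemma rect_K: assumes r: "rectilinear N"
  obtains u v where "det u v \<noteq> 0" "K = Qp (- (1/2) *\<^sub>R (u + v)) u v"
proof -
  obtain c u v where uv: "u \<noteq> v" "independent {u, v}"
    and S: "unit_circle N = frontier (convex hull {c, c + u, c + u + v, c + v})"
    using r unfolding rectilinear_def by blast
  have d: "det u v \<noteq> 0" by (rule indep_det[OF uv(2,1)])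
  have KP: "K = Qp c u v"
  proof -
    have "convex hull {c, c + u, c + u + v, c + v} = K"
      by (rule K_eq) (use S in \<open>auto intro: finite_imp_compact_convex_hull\<close>)
    then show ?thesis using hull_Qp by simp
  qed
  have "N c \<le> 1" using KP unfolding Qp_def K_def
    by (smt (verit, best) add.right_neutral mem_Collect_eq scaleR_zero_left)
  then have "- c \<in> K" by (simp add: K_def)
  then obtain s1 t1 where st1: "- c = c + s1 *\<^sub>R u + t1 *\<^sub>R v" "0 \<le> s1" "s1 \<le> 1" "0 \<le> t1" "t1 \<le> 1"
    using KP by (auto simp: Qp_def)
  have "N (c + u + v) \<le> 1" using KP unfolding Qp_def K_def
    by (smt (verit, best) mem_Collect_eq scaleR_one)
  then have "- (c + u + v) \<in> K" using N_minus[of "c + u + v"] by (simp only: K_def mem_Collect_eq)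
  then obtain s2 t2 where st2: "- (c + u + v) = c + s2 *\<^sub>R u + t2 *\<^sub>R v" "0 \<le> s2" "s2 \<le> 1" "0 \<le> t2" "t2 \<le> 1"
    using KP by (auto simp: Qp_def)
  have "s1 *\<^sub>R u + t1 *\<^sub>R v = (s2 + 1) *\<^sub>R u + (t2 + 1) *\<^sub>R v"
  proof -
    have "s1 *\<^sub>R u + t1 *\<^sub>R v = (- c) - c" using st1(1) by (simp add: algebra_simps)
    also have "\<dots> = (- (c + u + v)) - c + u + v" by simp
    also have "\<dots> = (s2 + 1) *\<^sub>R u + (t2 + 1) *\<^sub>R v" using st2(1) by (simp add: algebra_simps)
    finally show ?thesis .
  qed
  then have "s1 = s2 + 1" "t1 = t2 + 1" using coords_unique[OF d] by blast+
  then have "s1 = 1" "t1 = 1" using st1 st2 by auto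
  then have h: "- c = c + u + v" using st1(1) by simp
  have i1: "(- c) \<bullet> e1 = (c + u + v) \<bullet> e1" and i2: "(- c) \<bullet> e2 = (c + u + v) \<bullet> e2" using h by simp_all
  have "c = - (1/2) *\<^sub>R (u + v)"
  proof (rule vec_eqI)
    show "c \<bullet> e1 = (- (1/2) *\<^sub>R (u + v)) \<bullet> e1" using i1 unfolding inner_add_left inner_minus_left inner_scaleR_left by (simp add: field_simps)
    show "c \<bullet> e2 = (- (1/2) *\<^sub>R (u + v)) \<bullet> e2" using i2 unfolding inner_add_left inner_minus_left inner_scaleR_left by (simp add: field_simps)
  qed
  then show ?thesis using that d KP by blast
qed

end

context plane
begin

lemma trm_val: assumes b: "birkhoff_orth N x y" and z1: "N z = 1" and z3: "N (Tf x y z) = 3"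
  shows "trm x y = 8/3"
proof -
  have d: "det x y \<noteq> 0" by (rule birk_det[OF b])
  have T: "Txy x y = Tf x y" by (rule Txy_Tf[OF d])
  let ?A = "Txy x y ` unit_circle N"
  have "Tf x y z \<in> ?A" using T z1 in_S by auto
  then have sup: "(SUP w\<in>?A. N w) = 3"
    using T_vals[OF b] z3 by (intro cSup_eq_maximum) auto
  define z' where "z' = (1/3) *\<^sub>R Tf x y z"
  have z'1: "N z' = 1" using z3 by (simp add: z'_def N_scale)
  have "Tf x y z' = (1/3) *\<^sub>R z" using Tf_linear[of x y] Tf_invol[OF d] by (simp add: z'_def linear_scale)
  then have nz': "N (Tf x y z') = 1/3" using z1 by (simp add: N_scale)
  have "Tf x y z' \<in> ?A" using T z'1 in_S by auto
  then have inf: "(INF w\<in>?A. N w) = 1/3"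
    using T_vals[OF b] nz' by (intro cInf_eq_minimum) auto
  show ?thesis unfolding trm_def sup inf by simp
qed

lemma gauge_le: assumes d: "det u v \<noteq> 0" and KQ: "K = Qp (- (1/2) *\<^sub>R (u + v)) u v"
  shows "N (a *\<^sub>R u + b *\<^sub>R v) \<le> 1 \<longleftrightarrow> \<bar>a\<bar> \<le> 1/2 \<and> \<bar>b\<bar> \<le> 1/2"
proof -
  have id: "- (1/2) *\<^sub>R (u + v) + s *\<^sub>R u + t *\<^sub>R v = (s - 1/2) *\<^sub>R u + (t - 1/2) *\<^sub>R v" for s t
    by (rule vec_eqI) (simp_all add: inner_add_left algebra_simps)
  show ?thesis
  proof
    assume "N (a *\<^sub>R u + b *\<^sub>R v) \<le> 1"
    then have "a *\<^sub>R u + b *\<^sub>R v \<in> K" by (simp add: K_def)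
    then have "a *\<^sub>R u + b *\<^sub>R v \<in> Qp (- (1/2) *\<^sub>R (u + v)) u v" using KQ by simp
    then obtain s t where st: "a *\<^sub>R u + b *\<^sub>R v = (s - 1/2) *\<^sub>R u + (t - 1/2) *\<^sub>R v"
      "0 \<le> s" "s \<le> 1" "0 \<le> t" "t \<le> 1" unfolding Qp_def id by blast
    then have "a = s - 1/2" "b = t - 1/2" using coords_unique[OF d] by blast+
    then show "\<bar>a\<bar> \<le> 1/2 \<and> \<bar>b\<bar> \<le> 1/2" using st unfolding abs_le_iff by (intro conjI; linarith)
  next
    assume ab: "\<bar>a\<bar> \<le> 1/2 \<and> \<bar>b\<bar> \<le> 1/2"
    have "a *\<^sub>R u + b *\<^sub>R v = - (1/2) *\<^sub>R (u + v) + (a + 1/2) *\<^sub>R u + (b + 1/2) *\<^sub>R v"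
      unfolding id by simp
    moreover have "0 \<le> a + 1/2" "a + 1/2 \<le> 1" "0 \<le> b + 1/2" "b + 1/2 \<le> 1" using ab by auto
    ultimately have "a *\<^sub>R u + b *\<^sub>R v \<in> Qp (- (1/2) *\<^sub>R (u + v)) u v" unfolding Qp_def by blast
    then have "a *\<^sub>R u + b *\<^sub>R v \<in> K" using KQ by simp
    then show "N (a *\<^sub>R u + b *\<^sub>R v) \<le> 1" by (simp add: K_def)
  qed
qed

lemma gauge: assumes d: "det u v \<noteq> 0" and KQ: "K = Qp (- (1/2) *\<^sub>R (u + v)) u v"
  shows "N (a *\<^sub>R u + b *\<^sub>R v) = 2 * max \<bar>a\<bar> \<bar>b\<bar>"
proof (cases "a = 0 \<and> b = 0")
  case True then show ?thesis by simp
next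
  case False
  define m where "m = 2 * max \<bar>a\<bar> \<bar>b\<bar>"
  have m0: "m > 0" using False by (auto simp: m_def max_def)
  have le: "N (a *\<^sub>R u + b *\<^sub>R v) \<le> m"
  proof -
    have "\<bar>a / m\<bar> \<le> 1/2 \<and> \<bar>b / m\<bar> \<le> 1/2" using m0 by (auto simp: m_def max_def field_simps)
    then have "N ((a / m) *\<^sub>R u + (b / m) *\<^sub>R v) \<le> 1" using gauge_le[OF d KQ] by blast
    moreover have "(a / m) *\<^sub>R u + (b / m) *\<^sub>R v = (1 / m) *\<^sub>R (a *\<^sub>R u + b *\<^sub>R v)"
      by (simp add: scaleR_add_right)
    ultimately have "N (a *\<^sub>R u + b *\<^sub>R v) / m \<le> 1" using m0 by (simp add: N_scale)
    then show ?thesis using m0 by (simp add: field_simps)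
  qed
  have ge: "m \<le> N (a *\<^sub>R u + b *\<^sub>R v)"
  proof (rule ccontr)
    define r where "r = N (a *\<^sub>R u + b *\<^sub>R v)"
    assume "\<not> m \<le> N (a *\<^sub>R u + b *\<^sub>R v)"
    then have rm: "r < m" by (simp add: r_def)
    show False
    proof (cases "r = 0")
      case True
      then have "a *\<^sub>R u + b *\<^sub>R v = 0 *\<^sub>R u + 0 *\<^sub>R v" using N_zero_iff by (simp add: r_def)
      then show False using coords_unique[OF d] False by blast
    next
      case False
      then have r0: "r > 0" using N_nonneg[of "a *\<^sub>R u + b *\<^sub>R v"] unfolding r_def by linarith
      have "N ((a / r) *\<^sub>R u + (b / r) *\<^sub>R v) = N ((1 / r) *\<^sub>R (a *\<^sub>R u + b *\<^sub>R v))"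
        by (simp add: scaleR_add_right)
      also have "\<dots> = 1" using r0 by (simp add: N_scale r_def)
      finally have "N ((a / r) *\<^sub>R u + (b / r) *\<^sub>R v) \<le> 1" by simp
      then have "\<bar>a / r\<bar> \<le> 1/2 \<and> \<bar>b / r\<bar> \<le> 1/2" using gauge_le[OF d KQ, of "a / r" "b / r"] by blast
      then have "\<bar>a\<bar> / r \<le> 1/2" "\<bar>b\<bar> / r \<le> 1/2" using r0 by (simp_all add: abs_divide)
      then have "\<bar>a\<bar> \<le> 1/2 * r" "\<bar>b\<bar> \<le> 1/2 * r" using r0 by (simp_all only: pos_divide_le_eq)
      then have "m \<le> r" unfolding m_def by linarith
      then show False using rm by simp
    qed
  qed
  show ?thesis using le ge by (simp add: m_def)
qed

lemma rect_cS: assumes r: "rectilinear N" shows "cS N = 8/3"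
proof -
  obtain u v where d: "det u v \<noteq> 0" and KQ: "K = Qp (- (1/2) *\<^sub>R (u + v)) u v"
    using rect_K[OF r] by blast
  note g = gauge[OF d KQ]
  define x where "x = (- 1/2) *\<^sub>R u + (- 1/2) *\<^sub>R v"
  define y where "y = u"
  define z where "z = (- 1/2) *\<^sub>R u + (1/2) *\<^sub>R v"
  have x1: "N x = 1" unfolding x_def g by simp
  have z1: "N z = 1" unfolding z_def g by simp
  have u0: "u \<noteq> 0" using d by auto
  have b: "birkhoff_orth N x y" unfolding birkhoff_orth_def
  proof (intro conjI allI)
    show "x \<noteq> 0" using x1 by auto
    show "y \<noteq> 0" using u0 by (simp add: y_def)
    fix t :: real
    have "x + t *\<^sub>R y = (t - 1/2) *\<^sub>R u + (- 1/2) *\<^sub>R v"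
      by (simp add: x_def y_def algebra_simps)
    then have "N (x + t *\<^sub>R y) = 2 * max \<bar>t - 1/2\<bar> \<bar>- 1/2\<bar>"
      using g[of "t - 1/2" "- 1/2"] by (simp only:)
    then show "N x \<le> N (x + t *\<^sub>R y)" using x1 by (simp add: max_def)
  qed
  have dxy: "det x y \<noteq> 0" by (rule birk_det[OF b])
  have "z = (- 1) *\<^sub>R x + (- 1) *\<^sub>R y" by (rule vec_eqI) (simp_all add: x_def y_def z_def inner_add_left inner_diff_left algebra_simps)
  then have "Tf x y z = (- 1) *\<^sub>R x - (- 1) *\<^sub>R y" using Tf_comb[OF dxy, of "- 1" "- 1"] by (simp only:)
  also have "\<dots> = (3/2) *\<^sub>R u + (1/2) *\<^sub>R v" by (rule vec_eqI) (simp_all add: x_def y_def inner_add_left inner_diff_left algebra_simps)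
  finally have "N (Tf x y z) = 3" using g[of "3/2" "1/2"] by simp
  then have "trm x y = 8/3" by (rule trm_val[OF b z1])
  moreover have "trm x y \<le> cS N" using cSUP_upper[OF _ trm_bdd, of "(x, y)"] b by (simp add: cS_eq)
  ultimately show ?thesis using cS_le by simp
qed

end

context plane
begin

lemma tri_eq: assumes e: "N (p + q) = N p + N q" and s: "0 \<le> s" and t: "0 \<le> t"
  shows "N (s *\<^sub>R p + t *\<^sub>R q) = s * N p + t * N q"
proof (rule antisym)
  show "N (s *\<^sub>R p + t *\<^sub>R q) \<le> s * N p + t * N q"
    using N_tri[of "s *\<^sub>R p" "t *\<^sub>R q"] s t by (simp add: N_scale)
  show "s * N p + t * N q \<le> N (s *\<^sub>R p + t *\<^sub>R q)"
  proof (cases "t \<le> s")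
    case True
    have eq: "s *\<^sub>R (p + q) = (s *\<^sub>R p + t *\<^sub>R q) + (s - t) *\<^sub>R q" by (simp add: algebra_simps)
    have "N (s *\<^sub>R (p + q)) \<le> N (s *\<^sub>R p + t *\<^sub>R q) + N ((s - t) *\<^sub>R q)"
      unfolding eq by (rule N_tri)
    then have "s * (N p + N q) \<le> N (s *\<^sub>R p + t *\<^sub>R q) + (s - t) * N q"
      using e s True by (simp add: N_scale)
    then show ?thesis by (simp add: algebra_simps)
  next
    case False
    have eq: "t *\<^sub>R (p + q) = (s *\<^sub>R p + t *\<^sub>R q) + (t - s) *\<^sub>R p" by (simp add: algebra_simps)
    have "N (t *\<^sub>R (p + q)) \<le> N (s *\<^sub>R p + t *\<^sub>R q) + N ((t - s) *\<^sub>R p)"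
      unfolding eq by (rule N_tri)
    then have "t * (N p + N q) \<le> N (s *\<^sub>R p + t *\<^sub>R q) + (t - s) * N p"
      using e t False by (simp add: N_scale)
    then show ?thesis by (simp add: algebra_simps)
  qed
qed

lemma l1_gauge: assumes b: "birkhoff_orth N x y" and x1: "N x = 1"
  and z1: "N (x + c *\<^sub>R y) = 1" and w3: "N (x - c *\<^sub>R y) = 3"
  shows "N (l *\<^sub>R x + m *\<^sub>R (x + c *\<^sub>R y)) = \<bar>l\<bar> + \<bar>m\<bar>"
proof -
  define z where "z = x + c *\<^sub>R y"
  have z1': "N z = 1" using z1 by (simp add: z_def)
  have pos: "N (l *\<^sub>R x + m *\<^sub>R z) = l + m" if "0 \<le> l" "0 \<le> m" for l m
  proof (rule antisym)
    show "N (l *\<^sub>R x + m *\<^sub>R z) \<le> l + m"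
      using N_tri[of "l *\<^sub>R x" "m *\<^sub>R z"] that x1 z1' by (simp add: N_scale)
    have "l *\<^sub>R x + m *\<^sub>R z = (l + m) *\<^sub>R x + (m * c) *\<^sub>R y" by (simp add: z_def algebra_simps)
    then show "l + m \<le> N (l *\<^sub>R x + m *\<^sub>R z)" using birk_bound[OF b, of "l + m" "m * c"] that x1 by simp
  qed
  have e: "N ((2 *\<^sub>R x) + (- z)) = N (2 *\<^sub>R x) + N (- z)"
  proof -
    have "2 *\<^sub>R x + - z = x - c *\<^sub>R y" by (simp add: z_def scaleR_2)
    then show ?thesis using w3 x1 z1' by (simp add: N_scale)
  qed
  have mix: "N (l *\<^sub>R x + m *\<^sub>R z) = l - m" if "0 \<le> l" "m \<le> 0" for l m
  proof -
    have "l *\<^sub>R x + m *\<^sub>R z = (l / 2) *\<^sub>R (2 *\<^sub>R x) + (- m) *\<^sub>R (- z)" by simp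
    then have "N (l *\<^sub>R x + m *\<^sub>R z) = (l / 2) * N (2 *\<^sub>R x) + (- m) * N (- z)"
      using tri_eq[OF e, of "l / 2" "- m"] that by simp
    then show ?thesis using x1 z1' by (simp add: N_scale)
  qed
  have "N (l *\<^sub>R x + m *\<^sub>R z) = \<bar>l\<bar> + \<bar>m\<bar>"
  proof (cases "0 \<le> l")
    case True
    show ?thesis
    proof (cases "0 \<le> m")
      case True then show ?thesis using pos \<open>0 \<le> l\<close> by simp
    next
      case False then show ?thesis using mix[of l m] \<open>0 \<le> l\<close> by simp
    qed
  next
    case False
    have neg: "N (l *\<^sub>R x + m *\<^sub>R z) = N ((- l) *\<^sub>R x + (- m) *\<^sub>R z)"
      by (metis N_minus minus_add_distrib scaleR_minus_left)
    show ?thesis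
    proof (cases "0 \<le> m")
      case True then show ?thesis using neg mix[of "- l" "- m"] False by simp
    next
      case f2: False then show ?thesis using neg pos[of "- l" "- m"] False by simp
    qed
  qed
  then show ?thesis by (simp add: z_def)
qed

lemma rect_from: assumes b: "birkhoff_orth N x y" and x1: "N x = 1" and z1: "N z = 1"
  and t3: "N (Tf x y z) = 3"
  shows "rectilinear N"
proof -
  have d: "det x y \<noteq> 0" by (rule birk_det[OF b])
  define al be where "al = det z y / det x y" and "be = det x z / det x y"
  have zc: "z = al *\<^sub>R x + be *\<^sub>R y" unfolding al_def be_def by (rule coords[OF d])
  have Tz: "Tf x y z = al *\<^sub>R x - be *\<^sub>R y" using Tf_comb[OF d] zc by metis
  have alz: "\<bar>al\<bar> \<le> 1" using birk_bound[OF b, of al be] zc x1 z1 by simp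
  have "Tf x y z = (2 * al) *\<^sub>R x - z" using Tz zc by (simp add: two_scale)
  then have "3 \<le> 2 * \<bar>al\<bar> + 1" using t3 N_tri_diff[of "(2 * al) *\<^sub>R x" z] x1 z1 by (simp add: N_scale abs_mult)
  then have al1: "\<bar>al\<bar> = 1" using alz by simp
  define c where "c = al * be"
  have aa: "al * al = 1" using al1 by (metis abs_mult_self_eq mult.right_neutral)
  have zz: "al *\<^sub>R z = x + c *\<^sub>R y" using aa by (simp add: zc c_def scaleR_add_right)
  have ww: "al *\<^sub>R Tf x y z = x - c *\<^sub>R y" using aa by (simp add: Tz c_def scaleR_diff_right)
  have z'1: "N (x + c *\<^sub>R y) = 1" using zz z1 al1 by (metis N_scale mult.right_neutral)
  have w3: "N (x - c *\<^sub>R y) = 3" using ww t3 al1 by (metis N_scale mult_1)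
  define z' where "z' = x + c *\<^sub>R y"
  have c0: "c \<noteq> 0" using w3 x1 by auto
  have dxz: "det x z' \<noteq> 0" using d c0 by (simp add: z'_def)
  have g: "N (l *\<^sub>R x + m *\<^sub>R z') = \<bar>l\<bar> + \<bar>m\<bar>" for l m
    unfolding z'_def by (rule l1_gauge[OF b x1 z'1 w3])
  let ?H = "convex hull {x, z', - x, - z'}"
  have HK: "?H = K"
  proof
    show "?H \<subseteq> K"
    proof (rule hull_minimal[where S=convex, OF _ K_convex])
      have "N x = 1" "N z' = 1" using x1 z'1 by (simp_all add: z'_def)
      then show "{x, z', - x, - z'} \<subseteq> K" by (simp add: K_def)
    qed
    show "K \<subseteq> ?H"
    proof
      fix w assume w: "w \<in> K"
      define l m where "l = det w z' / det x z'" and "m = det x w / det x z'"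
      have wc: "w = l *\<^sub>R x + m *\<^sub>R z'" unfolding l_def m_def by (rule coords[OF dxz])
      have lm: "\<bar>l\<bar> + \<bar>m\<bar> \<le> 1" using w g[of l m] wc by (simp add: K_def)
      have pts: "x \<in> ?H" "z' \<in> ?H" "- x \<in> ?H" "- z' \<in> ?H" by (simp_all add: hull_inc)
      have zero: "0 \<in> ?H"
      proof -
        have "(1/2) *\<^sub>R x + (1/2) *\<^sub>R (- x) \<in> ?H" by (rule convexD[OF convex_convex_hull pts(1) pts(3)]) auto
        then show ?thesis by simp
      qed
      define sx where "sx = (if 0 \<le> l then x else - x)"
      define sz where "sz = (if 0 \<le> m then z' else - z')"
      have sx: "sx \<in> ?H" "l *\<^sub>R x = \<bar>l\<bar> *\<^sub>R sx" using pts by (auto simp: sx_def)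
      have sz: "sz \<in> ?H" "m *\<^sub>R z' = \<bar>m\<bar> *\<^sub>R sz" using pts by (auto simp: sz_def)
      show "w \<in> ?H"
      proof (cases "\<bar>l\<bar> + \<bar>m\<bar> = 0")
        case True
        then have "l = 0" "m = 0" by (smt (verit) abs_ge_zero)+
        then have "w = 0" using wc by simp
        then show ?thesis using zero by simp
      next
        case False
        define s where "s = \<bar>l\<bar> + \<bar>m\<bar>"
        have s0: "s > 0" using False by (simp add: s_def add_nonneg_nonneg less_eq_real_def)
        have p: "(\<bar>l\<bar> / s) *\<^sub>R sx + (\<bar>m\<bar> / s) *\<^sub>R sz \<in> ?H"
          by (rule convexD[OF convex_convex_hull sx(1) sz(1)])
            (use s0 in \<open>auto simp: s_def add_divide_distrib[symmetric]\<close>)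
        have "s *\<^sub>R ((\<bar>l\<bar> / s) *\<^sub>R sx + (\<bar>m\<bar> / s) *\<^sub>R sz) + (1 - s) *\<^sub>R 0 \<in> ?H"
          by (rule convexD[OF convex_convex_hull p zero]) (use s0 lm in \<open>auto simp: s_def\<close>)
        moreover have "s *\<^sub>R ((\<bar>l\<bar> / s) *\<^sub>R sx + (\<bar>m\<bar> / s) *\<^sub>R sz) + (1 - s) *\<^sub>R 0 = w"
          using s0 wc sx(2) sz(2) by (simp add: scaleR_add_right)
        ultimately show ?thesis by simp
      qed
    qed
  qed
  have dd: "det (z' - x) (- x - z') \<noteq> 0" using dxz det_swap[of z' x] by simp
  have A: "z' - x \<noteq> - x - z'" using det_indep(2)[OF dd] .
  have B: "independent {z' - x, - x - z'}" using det_indep(1)[OF dd] .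
  have "{x, x + (z' - x), x + (z' - x) + (- x - z'), x + (- x - z')} = {x, z', - x, - z'}" by simp
  then have C: "unit_circle N = frontier (convex hull {x, x + (z' - x), x + (z' - x) + (- x - z'), x + (- x - z')})"
    using HK frontier_K by simp
  show ?thesis unfolding rectilinear_def using A B C by blast
qed

end

context plane
begin

lemma Tf_scale_inv: assumes d: "det x y \<noteq> 0" and a: "a \<noteq> 0" and b: "b \<noteq> 0"
  shows "Tf (a *\<^sub>R x) (b *\<^sub>R y) z = Tf x y z"
proof -
  have "(2 * (a * det x z) / (a * (b * det x y))) * b = 2 * det x z / det x y"
    using a b d by (simp add: field_simps)
  then show ?thesis unfolding Tf_def by simp
qed

lemma approx: assumes c: "cS N = 8/3" and e: "e > 0"
  shows "\<exists>x y z. N x = 1 \<and> N y = 1 \<and> N z = 1 \<and> birkhoff_orth N x y \<and> 3 - e < N (Tf x y z)"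
proof -
  have "8/3 - e < cS N" using c e by simp
  then obtain p where p: "p \<in> {(x, y). birkhoff_orth N x y}" "8/3 - e < trm (fst p) (snd p)"
    unfolding cS_eq using less_cSUP_iff[OF P_ne trm_bdd] by blast
  obtain x0 y0 where pxy: "p = (x0, y0)" by (cases p)
  have b0: "birkhoff_orth N x0 y0" using p pxy by simp
  let ?A = "Txy x0 y0 ` unit_circle N"
  have inf3: "1/3 \<le> (INF z\<in>?A. N z)" by (rule cINF_greatest[OF T_ne]) (use T_vals[OF b0] in auto)
  have "3 - e < (SUP z\<in>?A. N z)" using p(2) inf3 pxy by (simp add: trm_def)
  then obtain w where w: "w \<in> ?A" "3 - e < N w" using less_cSUP_iff[OF T_ne T_bdd(1)[OF b0]] by blast
  have d0: "det x0 y0 \<noteq> 0" by (rule birk_det[OF b0])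
  obtain z where z: "N z = 1" "w = Tf x0 y0 z" using w(1) Txy_Tf[OF d0] in_S by auto
  have x00: "x0 \<noteq> 0" and y00: "y0 \<noteq> 0" using birk_ne[OF b0] by auto
  define x y where "x = (1 / N x0) *\<^sub>R x0" and "y = (1 / N y0) *\<^sub>R y0"
  have nx: "1 / N x0 \<noteq> 0" and ny: "1 / N y0 \<noteq> 0" using x00 y00 N_zero_iff by auto
  have b: "birkhoff_orth N x y" unfolding x_def y_def by (rule birk_scale[OF b0 nx ny])
  have "Tf x y z = Tf x0 y0 z" unfolding x_def y_def by (rule Tf_scale_inv[OF d0 nx ny])
  moreover have "N x = 1" "N y = 1" unfolding x_def y_def using normalize_S x00 y00 by auto
  ultimately show ?thesis using b z w(2) by metis
qed

lemma det_tendsto: assumes "P \<longlonglongrightarrow> p" "Q \<longlonglongrightarrow> q"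
  shows "(\<lambda>n. det (P n) (Q n)) \<longlonglongrightarrow> det p q"
  unfolding det_def by (intro tendsto_intros assms)

lemma Tf_tendsto: assumes "P \<longlonglongrightarrow> p" "Q \<longlonglongrightarrow> q" "R \<longlonglongrightarrow> r" "det p q \<noteq> 0"
  shows "(\<lambda>n. Tf (P n) (Q n) (R n)) \<longlonglongrightarrow> Tf p q r"
  unfolding Tf_def by (intro tendsto_intros det_tendsto assms)

lemma limit_exists: assumes c: "cS N = 8/3"
  shows "\<exists>x y z. N x = 1 \<and> N z = 1 \<and> birkhoff_orth N x y \<and> N (Tf x y z) = 3"
proof -
  let ?Q = "\<lambda>n (t :: 'a \<times> 'a \<times> 'a). N (fst t) = 1 \<and> N (fst (snd t)) = 1 \<and> N (snd (snd t)) = 1 \<and>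
     birkhoff_orth N (fst t) (fst (snd t)) \<and> 3 - inverse (real (Suc n)) < N (Tf (fst t) (fst (snd t)) (snd (snd t)))"
  have "\<forall>n. \<exists>t. ?Q n t"
  proof
    fix n
    obtain x y z where "N x = 1 \<and> N y = 1 \<and> N z = 1 \<and> birkhoff_orth N x y \<and> 3 - inverse (real (Suc n)) < N (Tf x y z)"
      using approx[OF c, of "inverse (real (Suc n))"] by auto
    then show "\<exists>t. ?Q n t" by (intro exI[of _ "(x, y, z)"]) simp
  qed
  then obtain F where F: "\<And>n. ?Q n (F n)" by metis
  let ?S3 = "unit_circle N \<times> unit_circle N \<times> unit_circle N"
  have cpt: "compact ?S3" using S_compact by (intro compact_Times)
  have inS: "\<forall>n. F n \<in> ?S3" using F by (auto simp: in_S mem_Times_iff)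
  obtain l r where l: "l \<in> ?S3" and r: "strict_mono (r :: nat \<Rightarrow> nat)" and lim: "(F \<circ> r) \<longlonglongrightarrow> l"
    using seq_compactE[OF compact_imp_seq_compact[OF cpt] inS] by blast
  obtain x y z where lxyz: "l = (x, y, z)" by (cases l) auto
  have lx: "(\<lambda>n. fst (F (r n))) \<longlonglongrightarrow> x" using tendsto_fst[OF lim] lxyz by (simp add: o_def)
  have ly: "(\<lambda>n. fst (snd (F (r n)))) \<longlonglongrightarrow> y" using tendsto_fst[OF tendsto_snd[OF lim]] lxyz by (simp add: o_def)
  have lz: "(\<lambda>n. snd (snd (F (r n)))) \<longlonglongrightarrow> z" using tendsto_snd[OF tendsto_snd[OF lim]] lxyz by (simp add: o_def)
  have x1: "N x = 1" and y1: "N y = 1" and z1: "N z = 1" using l lxyz by (auto simp: in_S)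
  have b: "birkhoff_orth N x y" unfolding birkhoff_orth_def
  proof (intro conjI allI)
    show "x \<noteq> 0" "y \<noteq> 0" using x1 y1 by auto
    fix t :: real
    have "(\<lambda>n. N (fst (F (r n)) + t *\<^sub>R fst (snd (F (r n))))) \<longlonglongrightarrow> N (x + t *\<^sub>R y)"
      by (intro N_tendsto tendsto_intros lx ly)
    moreover have "\<forall>n. 1 \<le> N (fst (F (r n)) + t *\<^sub>R fst (snd (F (r n))))"
      using F birk_le by metis
    ultimately have "1 \<le> N (x + t *\<^sub>R y)" by (intro LIMSEQ_le_const) auto
    then show "N x \<le> N (x + t *\<^sub>R y)" using x1 by simp
  qed
  have d: "det x y \<noteq> 0" by (rule birk_det[OF b])
  have conv: "(\<lambda>n. N (Tf (fst (F (r n))) (fst (snd (F (r n)))) (snd (snd (F (r n)))))) \<longlonglongrightarrow> N (Tf x y z)"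
    by (intro N_tendsto Tf_tendsto lx ly lz d)
  have low: "(\<lambda>n. 3 - inverse (real (Suc n))) \<longlonglongrightarrow> 3"
    using tendsto_diff[OF tendsto_const LIMSEQ_inverse_real_of_nat, of 3] by simp
  have le: "3 - inverse (real (Suc n)) \<le> N (Tf (fst (F (r n))) (fst (snd (F (r n)))) (snd (snd (F (r n)))))" for n
  proof -
    have "n \<le> r n" using seq_suble[OF r] by simp
    then have "inverse (real (Suc (r n))) \<le> inverse (real (Suc n))" by (simp add: le_imp_inverse_le)
    moreover have "3 - inverse (real (Suc (r n))) < N (Tf (fst (F (r n))) (fst (snd (F (r n)))) (snd (snd (F (r n)))))"
      using F by blast
    ultimately show ?thesis by linarith
  qed
  have "3 \<le> N (Tf x y z)" by (rule LIMSEQ_le[OF low conv]) (use le in auto)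
  moreover have "N (Tf x y z) \<le> 3" using Tf_bound[OF b, of z] z1 by simp
  ultimately show ?thesis using x1 z1 b by (intro exI[of _ x] exI[of _ y] exI[of _ z]) auto
qed

lemma cS83_rect: assumes "cS N = 8/3" shows "rectilinear N"
  using limit_exists[OF assms] rect_from by blast

end

theorem theorem5p1:
  fixes N :: "'a::euclidean_space \<Rightarrow> real"
  assumes "DIM('a) = 2" and "is_norm N"
  shows "0 \<le> cS N \<and> cS N \<le> 8 / 3 \<and>
         (cS N = 0 \<longleftrightarrow> inner_product_norm N) \<and>
         (cS N = 8 / 3 \<longleftrightarrow> rectilinear N)"
proof -
  have "card (Basis :: 'a set) = 2" using assms(1) by simp
  then obtain e1 e2 :: 'a where B: "Basis = {e1, e2}" "e1 \<noteq> e2" unfolding card_2_iff by blast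
  interpret plane N e1 e2 by (unfold_locales) (use B assms(2) in auto)
  show ?thesis using cS_nonneg cS_le cS0_isoR isoR_inner inner_cS0 rect_cS cS83_rect by blast
qed

end
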